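(* Let $N=1$, assume (H-EL), (H-R), $e_*=+\infty$, and that $Q(s)\to-S\in(0,+\infty)$ and $sQ'(s)\to0$ as $s\to+\infty$. Let $(u_{0k})\subset\mathcal A$ with $u_{0k}\to+\infty$, let $u_k$ be the solution of $(P_{u_{0k}})$ with $\operatorname{supp}u_k=[-\bar r_k,\bar r_k]$. Then $\mu(u_{0k})\to+\infty$, $$u_{0k}^4\sim\tfrac{9|S|}{32}\mu(u_{0k})^2,\qquad \bar r_k^4\sim\tfrac{9}{8|S|}\mu(u_{0k})^2\quad(k\to\infty),$$ and $u_{0k}^{-1}u_k(\bar r_k y)\to1-y^2$ in $C^2_{loc}((-1,1))$.
   Context: Hypothesis (H-EL): $Q\in C^1((0,+\infty))$, $Q\equiv0$ on $(-\infty,0]$, $\inf Q>-\infty$, $Q(u)\sim Au^{1-m}$ as $u\to0^+$ with $A>0$, $1<m<3$, and $|sQ'(s)|\le CQ(s)$ for small $s>0$. $R(s)=Q(s)/s$. (H-R): $R'\ne0$ on $(0,\delta)\cup(\delta^{-1},\infty)$ for some $\delta\in(0,1)$. $e_*=+\infty$ means $R$ attains no minimum on $(0,\infty)$. $(P_{s})$: $-u''+Q'(u)=R(s)$ in $\{u>0\}$, $u(0)=s$, $u'(0)=0$. $\mathcal A=\{s>0: R'(s)<0,\ R(t)>R(s)\ \forall t\in(0,s)\}$; for $s\in\mathcal A$ the solution $u_s$ of $(P_s)$ is even with compact support $[-\bar r_s,\bar r_s]$, and $\mu(s)=2\int_0^{\bar r_s}u_s$ is its mass. *)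

theory Defs
  imports "HOL-Analysis.Analysis" "HOL-Library.Landau_Symbols"
begin

definition RR :: "(real \<Rightarrow> real) \<Rightarrow> real \<Rightarrow> real" where
  "RR Q s = Q s / s"

definition H_EL :: "(real \<Rightarrow> real) \<Rightarrow> (real \<Rightarrow> real) \<Rightarrow> real \<Rightarrow> real \<Rightarrow> bool" where
  "H_EL Q dQ A m \<longleftrightarrow>
     (\<forall>x>0. (Q has_real_derivative dQ x) (at x)) \<and> continuous_on {0<..} dQ \<and>
     (\<forall>x\<le>0. Q x = 0) \<and> bdd_below (range Q) \<and>
     A > 0 \<and> 1 < m \<and> m < 3 \<and>
     (Q \<sim>[at_right 0] (\<lambda>u. A * u powr (1 - m))) \<and>
     (\<exists>C \<epsilon>. \<epsilon> > 0 \<and> (\<forall>s. 0 < s \<and> s < \<epsilon> \<longrightarrow> \<bar>s * dQ s\<bar> \<le> C * Q s))"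

definition H_R :: "(real \<Rightarrow> real) \<Rightarrow> bool" where
  "H_R Q \<longleftrightarrow> (\<exists>\<delta>. 0 < \<delta> \<and> \<delta> < 1 \<and>
     (\<forall>s. (0 < s \<and> s < \<delta>) \<or> s > 1 / \<delta> \<longrightarrow> deriv (RR Q) s \<noteq> 0))"

definition e_star_infinite :: "(real \<Rightarrow> real) \<Rightarrow> bool" where
  "e_star_infinite Q \<longleftrightarrow> \<not> (\<exists>s>0. \<forall>t>0. RR Q s \<le> RR Q t)"

definition setA :: "(real \<Rightarrow> real) \<Rightarrow> real set" where
  "setA Q = {s. s > 0 \<and> deriv (RR Q) s < 0 \<and> (\<forall>t. 0 < t \<and> t < s \<longrightarrow> RR Q t > RR Q s)}"

definition solves_P :: "(real \<Rightarrow> real) \<Rightarrow> (real \<Rightarrow> real) \<Rightarrow> real \<Rightarrow> (real \<Rightarrow> real) \<Rightarrow> real \<Rightarrow> bool" where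
  "solves_P Q dQ s u r \<longleftrightarrow>
     r > 0 \<and> continuous_on UNIV u \<and>
     (\<forall>x. \<bar>x\<bar> < r \<longrightarrow> u x > 0) \<and> (\<forall>x. \<bar>x\<bar> \<ge> r \<longrightarrow> u x = 0) \<and>
     u 0 = s \<and>
     (\<exists>u'. u' 0 = 0 \<and>
        (\<forall>x. \<bar>x\<bar> < r \<longrightarrow> (u has_real_derivative u' x) (at x) \<and>
                             (u' has_real_derivative (dQ (u x) - RR Q s)) (at x)))"

definition mass :: "(real \<Rightarrow> real) \<Rightarrow> real \<Rightarrow> real" where
  "mass u r = 2 * integral {0..r} u"

end

theory Submission
  imports Defs
begin

lemma RR_deriv:
  assumes D: "\<forall>x>0. (Q has_real_derivative dQ x) (at x)" and s: "s > 0"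
  shows "(RR Q has_real_derivative (dQ s * s - Q s) / s^2) (at s)"
proof -
  have "((\<lambda>s. Q s / s) has_real_derivative (dQ s * s - Q s * 1) / (s * s)) (at s)"
    by (rule DERIV_divide) (use D s in auto)
  thus ?thesis unfolding RR_def by (simp add: power2_eq_square)
qed

lemma sol_props:
  fixes Q dQ v :: "real \<Rightarrow> real" and s r :: real
  assumes D: "\<forall>x>0. (Q has_real_derivative dQ x) (at x)"
    and sA: "s \<in> setA Q" and sol: "solves_P Q dQ s v r"
  obtains v' where "v' 0 = 0"
    "\<And>x. \<bar>x\<bar> < r \<Longrightarrow> (v has_real_derivative v' x) (at x)"
    "\<And>x. \<bar>x\<bar> < r \<Longrightarrow> (v' has_real_derivative (dQ (v x) - RR Q s)) (at x)"
    "\<And>x. \<bar>x\<bar> < r \<Longrightarrow> (v' x)^2 = 2 * (Q (v x) - v x * RR Q s)"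
    "\<And>x. 0 < x \<Longrightarrow> x < r \<Longrightarrow> v' x < 0"
proof -
  have s0: "s > 0" and dR: "deriv (RR Q) s < 0" and Rgt: "\<And>t. 0 < t \<Longrightarrow> t < s \<Longrightarrow> RR Q t > RR Q s"
    using sA unfolding setA_def by auto
  have r0: "r > 0" and vpos: "\<And>x. \<bar>x\<bar> < r \<Longrightarrow> v x > 0" and v0: "v 0 = s"
    and vcont: "continuous_on UNIV v"
    using sol unfolding solves_P_def by auto
  obtain v' where v'0: "v' 0 = 0" and Dv: "\<And>x. \<bar>x\<bar> < r \<Longrightarrow> (v has_real_derivative v' x) (at x)"
    and Dv': "\<And>x. \<bar>x\<bar> < r \<Longrightarrow> (v' has_real_derivative (dQ (v x) - RR Q s)) (at x)"
    using sol unfolding solves_P_def by blast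
  define R where "R = RR Q s"
  define g where "g t = Q t - t * R" for t
  have gpos: "g t > 0" if "0 < t" "t < s" for t
  proof -
    have "RR Q t > R" using Rgt that R_def by auto
    hence "Q t / t > R" unfolding RR_def .
    thus ?thesis using that unfolding g_def by (simp add: field_simps)
  qed
  have Rs: "R * s = Q s" using s0 unfolding R_def RR_def by simp
  have ddneg: "dQ s - R < 0"
  proof -
    have "deriv (RR Q) s = (dQ s * s - Q s) / s^2"
      using RR_deriv[OF D s0] by (rule DERIV_imp_deriv)
    with dR have "dQ s * s - Q s < 0" using s0 by (simp add: divide_less_0_iff)
    thus ?thesis unfolding R_def RR_def using s0 by (simp add: field_simps)
  qed
  define E where "E x = (v' x)^2 / 2 - Q (v x) + R * v x" for x
  have DE: "(E has_real_derivative 0) (at x)" if "\<bar>x\<bar> < r" for x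
  proof -
    have DQ: "((\<lambda>x. Q (v x)) has_real_derivative dQ (v x) * v' x) (at x)"
      using DERIV_chain2[OF D[rule_format, OF vpos[OF that]] Dv[OF that]] .
    have "(E has_real_derivative (2 * v' x * (dQ (v x) - R)) / 2 - dQ (v x) * v' x + R * v' x) (at x)"
      unfolding E_def R_def
      using Dv'[OF that] DQ Dv[OF that]
      by (auto intro!: derivative_eq_intros simp: power2_eq_square)
    moreover have "(2 * v' x * (dQ (v x) - R)) / 2 - dQ (v x) * v' x + R * v' x = 0"
      by (simp add: field_simps)
    ultimately show ?thesis by simp
  qed
  obtain c where c: "\<forall>x\<in>{-r<..<r}. E x = c"
    using has_field_derivative_zero_constant[of "{-r<..<r}" E] DE
    by (metis abs_less_iff greaterThanLessThan_iff has_field_derivative_at_within convex_real_interval(8) minus_less_iff)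
  have "E 0 = 0" unfolding E_def using v'0 v0 Rs by simp
  hence Ezero: "E x = 0" if "\<bar>x\<bar> < r" for x
    using c that r0 \<open>E 0 = 0\<close> by (auto simp: abs_less_iff)
  have energy: "(v' x)^2 = 2 * g (v x)" if "\<bar>x\<bar> < r" for x
    using Ezero[OF that] unfolding E_def g_def by (simp add: algebra_simps)
  have v'cont: "continuous_on {a..b} v'" if "-r < a" "b < r" for a b
    by (rule continuous_at_imp_continuous_on) (use that in \<open>auto intro!: DERIV_isCont[OF Dv']\<close>)
  have vcont': "continuous_on S v" for S using vcont continuous_on_subset by blast
  obtain e1 where e1: "0 < e1" "e1 < r" "\<And>x. 0 < x \<Longrightarrow> x \<le> e1 \<Longrightarrow> v' x < 0"
  proof -
    have "((\<lambda>x. (v' x - v' 0) / (x - 0)) \<longlongrightarrow> dQ (v 0) - R) (at 0)"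
      using Dv'[of 0] r0 unfolding R_def has_field_derivative_iff by simp
    hence "((\<lambda>x. v' x / x) \<longlongrightarrow> dQ s - R) (at_right 0)"
      using v'0 v0 by (simp add: filterlim_at_split)
    hence "eventually (\<lambda>x. v' x / x < 0) (at_right 0)"
      using ddneg by (simp add: order_tendsto_iff)
    then obtain d where d: "d > 0" "\<And>x. 0 < x \<Longrightarrow> x < d \<Longrightarrow> v' x / x < 0"
      unfolding eventually_at_right_field by auto
    define e where "e = min (d/2) (r/2)"
    have "0 < e" "e < r" using d r0 unfolding e_def by auto
    moreover have "v' x < 0" if "0 < x" "x \<le> e" for x
      using d(2)[of x] that d r0 unfolding e_def by (simp add: divide_less_0_iff)
    ultimately show ?thesis using that by blast
  qed
  have neg: "v' x < 0" if x: "0 < x" "x < r" for x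
  proof (rule ccontr)
    assume "\<not> v' x < 0"
    hence vx: "v' x \<ge> 0" by simp
    have xe: "x > e1" using e1 x vx by force
    define T where "T = {y \<in> {e1..x}. v' y \<ge> 0}"
    have cT: "compact T"
    proof -
      have "closed T" unfolding T_def
        using continuous_closed_preimage[OF v'cont[of e1 x], of "{0..}"] e1 x
        by (simp add: vimage_def Int_def)
      moreover have "T \<subseteq> {e1..x}" unfolding T_def by auto
      ultimately show ?thesis
        using compact_Icc compact_imp_bounded bounded_subset compact_eq_bounded_closed by metis
    qed
    have neT: "T \<noteq> {}" unfolding T_def using vx xe by auto
    obtain z where zT: "z \<in> T" and zmin: "\<And>y. y \<in> T \<Longrightarrow> z \<le> y"
      using compact_attains_inf[OF cT neT] by auto
    have z: "e1 \<le> z" "z \<le> x" "v' z \<ge> 0" using zT unfolding T_def by auto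
    have z1: "z > e1"
    proof (rule ccontr)
      assume "\<not> z > e1" hence "z = e1" using z by simp
      thus False using e1(3)[of e1] e1(1) z(3) by simp
    qed
    have vz_neg: "v' y < 0" if "0 < y" "y < z" for y
    proof (cases "y \<le> e1")
      case True thus ?thesis using e1 that by auto
    next
      case False
      have "y \<notin> T" using zmin[of y] that by linarith
      thus ?thesis unfolding T_def using False that z by auto
    qed
    obtain l w where w: "0 < w" "w < z" "(v has_real_derivative l) (at w)" "v z - v 0 = (z - 0) * l"
    proof -
      have "v differentiable (at y)" if "0 < y" "y < z" for y
        using Dv[of y] that z1 z x e1 by (auto simp: real_differentiable_def)
      hence "\<exists>l w. 0 < w \<and> w < z \<and> DERIV v w :> l \<and> v z - v 0 = (z - 0) * l"
        by (intro MVT) (use z1 e1 vcont' in auto)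
      thus ?thesis using that by blast
    qed
    have "\<bar>w\<bar> < r" using w z x by auto
    hence "l = v' w" using DERIV_unique[OF w(3) Dv[of w]] by auto
    moreover have "z * v' w < 0" using w vz_neg[of w] by (simp add: mult_pos_neg)
    ultimately have "v z < s" using w v0 by simp
    moreover have "v z > 0" using vpos[of z] z x e1 by auto
    ultimately have "g (v z) > 0" using gpos by auto
    moreover have "(v' z)^2 = 2 * g (v z)" using energy[of z] z x e1 by auto
    ultimately have "v' z \<noteq> 0" by auto
    hence "v' z > 0" using z by auto
    moreover have "v' e1 < 0" using e1 by auto
    ultimately obtain y where "e1 \<le> y" "y \<le> z" "v' y = 0"
    proof -
      have "-r < e1" "z < r" using e1 z x by auto
      from IVT'[of v' e1 0 z, OF _ _ _ v'cont[OF this]] \<open>v' z > 0\<close> \<open>v' e1 < 0\<close> z1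
      show ?thesis using that by auto
    qed
    moreover have "y \<noteq> z" using \<open>v' z > 0\<close> \<open>v' y = 0\<close> by auto
    ultimately show False using vz_neg[of y] e1 by auto
  qed
  show ?thesis
    by (rule that[of v']) (use v'0 Dv Dv' energy neg in \<open>auto simp: g_def R_def\<close>)
qed

lemma sol_reflect:
  assumes "solves_P Q dQ s v r"
  shows "solves_P Q dQ s (\<lambda>x. v (-x)) r"
proof -
  obtain v' where v'0: "v' 0 = 0" and Dv: "\<And>x. \<bar>x\<bar> < r \<Longrightarrow> (v has_real_derivative v' x) (at x)"
    and Dv': "\<And>x. \<bar>x\<bar> < r \<Longrightarrow> (v' has_real_derivative (dQ (v x) - RR Q s)) (at x)"
    using assms unfolding solves_P_def by blast
  have c: "continuous_on UNIV (\<lambda>x. v (-x))"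
    using assms unfolding solves_P_def by (auto intro!: continuous_intros elim: continuous_on_compose2)
  have "((\<lambda>x. v (-x)) has_real_derivative - v' (-x)) (at x)" if "\<bar>x\<bar> < r" for x
    using Dv[of "-x"] that DERIV_mirror[where f=v and x=x and y="v' (-x)"] by simp
  moreover have "((\<lambda>x. - v' (-x)) has_real_derivative (dQ (v (-x)) - RR Q s)) (at x)" if "\<bar>x\<bar> < r" for x
  proof -
    have "((\<lambda>x. v' (-x)) has_real_derivative - (dQ (v (-x)) - RR Q s)) (at x)"
      using Dv'[of "-x"] that DERIV_mirror[where f=v' and x=x] by simp
    from DERIV_minus[OF this] show ?thesis by simp
  qed
  ultimately show ?thesis using assms v'0 c unfolding solves_P_def
    by (intro conjI exI[of _ "\<lambda>x. - v' (-x)"]) auto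
qed

lemma sol_decr:
  fixes Q dQ v v' :: "real \<Rightarrow> real"
  assumes sol: "solves_P Q dQ s v r"
    and Dv: "\<And>x. \<bar>x\<bar> < r \<Longrightarrow> (v has_real_derivative v' x) (at x)"
    and neg: "\<And>x. 0 < x \<Longrightarrow> x < r \<Longrightarrow> v' x < 0"
    and xy: "0 \<le> x" "x < y" "y \<le> r"
  shows "v y < v x"
proof -
  have vc: "continuous_on {x..y} v" using sol unfolding solves_P_def
    using continuous_on_subset by blast
  have dif: "v differentiable (at t)" if "x < t" "t < y" for t
    using Dv[of t] that xy by (auto simp: real_differentiable_def)
  have "\<exists>l w. x < w \<and> w < y \<and> DERIV v w :> l \<and> v y - v x = (y - x) * l"
    by (intro MVT) (use xy vc dif in auto)
  then obtain l w where w: "x < w" "w < y" "DERIV v w :> l" "v y - v x = (y - x) * l" by blast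
  have "\<bar>w\<bar> < r" using w xy by auto
  hence "l = v' w" using DERIV_unique[OF w(3) Dv[of w]] by auto
  hence "l < 0" using neg[of w] w xy by auto
  hence "(y - x) * l < 0" using xy by (simp add: mult_pos_neg)
  thus ?thesis using w by simp
qed

lemma ev_at_right_ex:
  assumes "eventually P (at_right (0::real))"
  shows "\<exists>d>0. P d"
proof -
  obtain b where b: "b > 0" "\<And>y. y > 0 \<Longrightarrow> y < b \<Longrightarrow> P y"
    using assms unfolding eventually_at_right_field by auto
  thus ?thesis using b(2)[of "b/2"] b(1) by (intro exI[of _ "b/2"]) auto
qed

lemma squeeze_param:
  fixes X :: "nat \<Rightarrow> real" and d0 :: real
  assumes d0: "d0 > 0"
    and ev: "\<And>d. 0 < d \<Longrightarrow> d < d0 \<Longrightarrow> eventually (\<lambda>k. lo d \<le> X k \<and> X k \<le> hi d) sequentially"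
    and lo: "(lo \<longlongrightarrow> L) (at_right 0)" and hi: "(hi \<longlongrightarrow> L) (at_right 0)"
  shows "X \<longlonglongrightarrow> L"
proof (rule tendstoI)
  fix e :: real assume e: "e > 0"
  have "eventually (\<lambda>d. dist (lo d) L < e) (at_right 0)" using lo e by (rule tendstoD)
  moreover have "eventually (\<lambda>d. dist (hi d) L < e) (at_right 0)" using hi e by (rule tendstoD)
  moreover have "eventually (\<lambda>d. d < d0) (at_right (0::real))"
    unfolding eventually_at_right_field using d0 by (intro exI[of _ d0]) auto
  moreover have "eventually (\<lambda>d. d > 0) (at_right (0::real))"
    by (simp add: eventually_at_right_less)
  ultimately have "eventually (\<lambda>d. dist (lo d) L < e \<and> dist (hi d) L < e \<and> d < d0 \<and> d > 0) (at_right 0)"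
    by (intro eventually_conj)
  then obtain d where d: "dist (lo d) L < e \<and> dist (hi d) L < e \<and> d < d0 \<and> d > 0"
    using ev_at_right_ex[of "\<lambda>d. dist (lo d) L < e \<and> dist (hi d) L < e \<and> d < d0 \<and> d > 0"] by auto
  have "eventually (\<lambda>k. lo d \<le> X k \<and> X k \<le> hi d) sequentially" using ev d by blast
  thus "eventually (\<lambda>k. dist (X k) L < e) sequentially"
    by (rule eventually_mono) (use d in \<open>auto simp: dist_real_def\<close>)
qed

lemma KE_det:
  fixes Q dQ :: "real \<Rightarrow> real"
  assumes D: "\<forall>x>0. (Q has_real_derivative dQ x) (at x)"
    and s: "s > 0" and d: "d > 0" and Qs: "\<bar>Q s - \<sigma>\<bar> \<le> d/2"
    and sd: "\<And>t. t \<ge> d * s \<Longrightarrow> \<bar>t * dQ t\<bar> \<le> d^2/2"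
    and t: "d * s \<le> t" "t \<le> s"
  shows "\<bar>Q t - t * RR Q s - \<sigma> * (1 - t/s)\<bar> \<le> d * (1 - t/s)"
proof (cases "t = s")
  case True thus ?thesis using s by (simp add: RR_def)
next
  case False
  hence ts: "t < s" using t by simp
  have "0 < d * s" using d s by simp
  hence t0: "t > 0" using t by linarith
  have cont: "continuous_on {t..s} Q"
    by (rule continuous_at_imp_continuous_on) (use t0 in \<open>auto intro!: DERIV_isCont[OF D[rule_format]]\<close>)
  have dif: "Q differentiable (at y)" if "t < y" "y < s" for y
  proof -
    have "y > 0" using that t0 by linarith
    hence "(Q has_real_derivative dQ y) (at y)" by (rule D[rule_format])
    thus ?thesis unfolding real_differentiable_def by (rule exI)
  qed
  have "\<exists>l z. t < z \<and> z < s \<and> DERIV Q z :> l \<and> Q s - Q t = (s - t) * l"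
    by (intro MVT) (use ts cont dif in auto)
  then obtain l z where z: "t < z" "z < s" "DERIV Q z :> l" "Q s - Q t = (s - t) * l" by blast
  have z0: "z > 0" using z t0 by simp
  have "l = dQ z" using DERIV_unique[OF z(3) D[rule_format, OF z0]] .
  have "\<bar>z * l\<bar> \<le> d^2/2" using sd[of z] z t \<open>l = dQ z\<close> by auto
  moreover have "\<bar>z * l\<bar> = z * \<bar>l\<bar>" using z0 by (simp add: abs_mult)
  ultimately have "z * \<bar>l\<bar> \<le> d^2/2" by simp
  hence "\<bar>l\<bar> \<le> d^2/2 / z" using z0 by (simp add: le_divide_eq algebra_simps)
  also have "\<dots> \<le> d^2 / 2 / (d * s)"
  proof (rule divide_left_mono)
    show "d * s \<le> z" using z t by linarith
    show "0 \<le> d^2/2" by simp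
    show "0 < z * (d * s)" using z0 d s by simp
  qed
  also have "\<dots> = d / (2 * s)" using d s by (simp add: power2_eq_square)
  finally have l: "\<bar>l\<bar> \<le> d / (2 * s)" .
  have "\<bar>Q s - Q t\<bar> = (s - t) * \<bar>l\<bar>" using z(4) ts by (simp add: abs_mult)
  also have "\<dots> \<le> (s - t) * (d / (2 * s))" using l ts by (intro mult_left_mono) auto
  also have "\<dots> = d/2 * (1 - t/s)" using s by (simp add: field_simps)
  finally have A1: "\<bar>Q s - Q t\<bar> \<le> d/2 * (1 - t/s)" .
  have nn: "1 - t/s \<ge> 0" using t s by simp
  have "\<bar>(1 - t/s) * (Q s - \<sigma>)\<bar> = (1 - t/s) * \<bar>Q s - \<sigma>\<bar>" using nn by (simp add: abs_mult)
  also have "\<dots> \<le> (1 - t/s) * (d/2)" using Qs nn by (intro mult_left_mono) auto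
  finally have A2: "\<bar>(1 - t/s) * (Q s - \<sigma>)\<bar> \<le> (1 - t/s) * (d/2)" .
  have eq: "Q t - t * RR Q s - \<sigma> * (1 - t/s) = (Q t - Q s) + (1 - t/s) * (Q s - \<sigma>)"
    using s by (simp add: RR_def field_simps)
  have e2: "d/2 * (1 - t/s) + (1 - t/s) * (d/2) = d * (1 - t/s)" by (simp add: algebra_simps)
  have "\<bar>(Q t - Q s) + (1 - t/s) * (Q s - \<sigma>)\<bar> \<le> \<bar>Q t - Q s\<bar> + \<bar>(1 - t/s) * (Q s - \<sigma>)\<bar>"
    by (rule abs_triangle_ineq)
  also have "\<dots> \<le> d/2 * (1 - t/s) + (1 - t/s) * (d/2)" using A1 A2 abs_minus_commute[of "Q t" "Q s"] by linarith
  finally show ?thesis unfolding eq e2 .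
qed

locale setting =
  fixes Q dQ :: "real \<Rightarrow> real" and \<sigma> q :: real and u0 :: "nat \<Rightarrow> real"
    and u :: "nat \<Rightarrow> real \<Rightarrow> real" and rb :: "nat \<Rightarrow> real"
  assumes D: "\<forall>x>0. (Q has_real_derivative dQ x) (at x)"
    and \<sigma>: "\<sigma> > 0" and Qlim: "(Q \<longlongrightarrow> \<sigma>) at_top"
    and sdQ: "((\<lambda>s. s * dQ s) \<longlongrightarrow> 0) at_top"
    and q: "q > 0" and qQ: "\<And>t. t > 0 \<Longrightarrow> q \<le> Q t"
    and A: "\<And>k. u0 k \<in> setA Q" and lim: "filterlim u0 at_top sequentially"
    and sol: "\<And>k. solves_P Q dQ (u0 k) (u k) (rb k)"
begin

definition P_du where "P_du k v' \<longleftrightarrow> v' 0 = 0 \<and>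
   (\<forall>x. \<bar>x\<bar> < rb k \<longrightarrow> (u k has_real_derivative v' x) (at x) \<and>
        (v' has_real_derivative (dQ (u k x) - RR Q (u0 k))) (at x) \<and>
        (v' x)^2 = 2 * (Q (u k x) - u k x * RR Q (u0 k))) \<and>
   (\<forall>x. 0 < x \<and> x < rb k \<longrightarrow> v' x < 0)"

definition du where "du k = (SOME v'. P_du k v')"

lemma du_P: "P_du k (du k)"
proof -
  have "\<exists>v'. P_du k v'"
  proof (rule sol_props[OF D A sol[of k]])
    fix v' assume "v' 0 = 0"
      "\<And>x. \<bar>x\<bar> < rb k \<Longrightarrow> (u k has_real_derivative v' x) (at x)"
      "\<And>x. \<bar>x\<bar> < rb k \<Longrightarrow> (v' has_real_derivative dQ (u k x) - RR Q (u0 k)) (at x)"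
      "\<And>x. \<bar>x\<bar> < rb k \<Longrightarrow> (v' x)\<^sup>2 = 2 * (Q (u k x) - u k x * RR Q (u0 k))"
      "\<And>x. 0 < x \<Longrightarrow> x < rb k \<Longrightarrow> v' x < 0"
    thus "\<exists>v'. P_du k v'" unfolding P_du_def by (intro exI[of _ v']) auto
  qed
  thus ?thesis unfolding du_def by (rule someI_ex)
qed

definition G where "G k t = Q t - t * RR Q (u0 k)"

lemma du0: "du k 0 = 0" using du_P unfolding P_du_def by blast
lemma Du: "\<bar>x\<bar> < rb k \<Longrightarrow> (u k has_real_derivative du k x) (at x)" using du_P unfolding P_du_def by blast
lemma Ddu: "\<bar>x\<bar> < rb k \<Longrightarrow> (du k has_real_derivative (dQ (u k x) - RR Q (u0 k))) (at x)"
  using du_P unfolding P_du_def by blast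
lemma energy: "\<bar>x\<bar> < rb k \<Longrightarrow> (du k x)^2 = 2 * G k (u k x)" using du_P unfolding P_du_def G_def by blast
lemma du_neg: "0 < x \<Longrightarrow> x < rb k \<Longrightarrow> du k x < 0" using du_P unfolding P_du_def by blast

lemma s_pos: "u0 k > 0" using A[of k] unfolding setA_def by auto
lemma r_pos: "rb k > 0" using sol[of k] unfolding solves_P_def by auto
lemma u_at0: "u k 0 = u0 k" using sol[of k] unfolding solves_P_def by auto
lemma u_cont: "continuous_on S (u k)" using sol[of k] unfolding solves_P_def
  using continuous_on_subset by blast
lemma u_pos: "\<bar>x\<bar> < rb k \<Longrightarrow> u k x > 0" using sol[of k] unfolding solves_P_def by auto
lemma u_out: "\<bar>x\<bar> \<ge> rb k \<Longrightarrow> u k x = 0" using sol[of k] unfolding solves_P_def by auto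
lemma u_nonneg: "u k x \<ge> 0" using u_pos[of x k] u_out[of k x] by (cases "\<bar>x\<bar> < rb k") auto
lemma u_r: "u k (rb k) = 0" using u_out[of k "rb k"] r_pos[of k] by auto

lemma decr: "0 \<le> x \<Longrightarrow> x < y \<Longrightarrow> y \<le> rb k \<Longrightarrow> u k y < u k x"
  by (rule sol_decr[OF sol Du du_neg])

lemma u_le: "0 \<le> x \<Longrightarrow> u k x \<le> u0 k"
proof -
  assume x: "0 \<le> x"
  show ?thesis
  proof (cases "x \<le> rb k")
    case True thus ?thesis using decr[of 0 x k] u_at0[of k] x by (cases "x = 0") auto
  next
    case False thus ?thesis using u_out[of k x] s_pos[of k] x by auto
  qed
qed

lemma u_lt: "0 < x \<Longrightarrow> u k x < u0 k"
proof -
  assume x: "0 < x"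
  show ?thesis
  proof (cases "x \<le> rb k")
    case True thus ?thesis using decr[of 0 x k] u_at0[of k] x by auto
  next
    case False thus ?thesis using u_out[of k x] s_pos[of k] x by auto
  qed
qed

lemma G_s: "G k (u0 k) = 0" using s_pos[of k] unfolding G_def RR_def by simp

lemma du_form: "0 \<le> x \<Longrightarrow> x < rb k \<Longrightarrow> du k x = - sqrt (2 * G k (u k x))"
proof -
  assume x: "0 \<le> x" "x < rb k"
  have e: "(du k x)^2 = 2 * G k (u k x)" using energy[of x k] x by auto
  show ?thesis
  proof (cases "x = 0")
    case True thus ?thesis using du0 u_at0 G_s by simp
  next
    case False
    hence "du k x < 0" using du_neg[of x k] x by auto
    have "sqrt (2 * G k (u k x)) = - du k x"
      using e[symmetric] real_sqrt_abs[of "du k x"] \<open>du k x < 0\<close> by simp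
    thus ?thesis by simp
  qed
qed

lemma ev_seq: "eventually P at_top \<Longrightarrow> eventually (\<lambda>k. P (u0 k)) sequentially"
  using lim unfolding filterlim_iff by blast

lemma Qs_lim: "(\<lambda>k. Q (u0 k)) \<longlonglongrightarrow> \<sigma>"
  using filterlim_compose[OF Qlim lim] .

lemma KE:
  assumes d: "0 < d"
  shows "eventually (\<lambda>k. \<forall>t. d * u0 k \<le> t \<and> t \<le> u0 k \<longrightarrow>
      \<bar>G k t - \<sigma> * (1 - t / u0 k)\<bar> \<le> d * (1 - t / u0 k)) sequentially"
proof -
  have "eventually (\<lambda>t. dist (t * dQ t) 0 < d^2/2) at_top"
    using sdQ d by (intro tendstoD) auto
  then obtain M where M: "\<And>t. t \<ge> M \<Longrightarrow> \<bar>t * dQ t\<bar> \<le> d^2/2"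
    unfolding eventually_at_top_linorder dist_real_def by (auto intro: less_imp_le)
  have "eventually (\<lambda>s. dist (Q s) \<sigma> < d/2) at_top"
    using Qlim d by (intro tendstoD) auto
  moreover have "eventually (\<lambda>s. s \<ge> M / d) at_top" by (rule eventually_ge_at_top)
  ultimately have "eventually (\<lambda>s. dist (Q s) \<sigma> < d/2 \<and> s \<ge> M/d) at_top"
    by eventually_elim auto
  from ev_seq[OF this] show ?thesis
  proof eventually_elim
    case (elim k)
    show ?case
    proof (intro allI impI)
      fix t assume t: "d * u0 k \<le> t \<and> t \<le> u0 k"
      have sd: "\<bar>t * dQ t\<bar> \<le> d^2/2" if "t \<ge> d * u0 k" for t
      proof -
        have "M \<le> d * u0 k" using elim d by (simp add: field_simps)
        thus ?thesis using M that by auto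
      qed
      show "\<bar>G k t - \<sigma> * (1 - t / u0 k)\<bar> \<le> d * (1 - t / u0 k)"
        unfolding G_def
        by (rule KE_det[OF D s_pos d _ sd]) (use elim t in \<open>auto simp: dist_real_def\<close>)
    qed
  qed
qed

lemma TE:
  assumes d: "0 < d" "d \<le> q / (4 * \<sigma>)"
  shows "eventually (\<lambda>k. \<forall>t. 0 < t \<and> t \<le> d * u0 k \<longrightarrow> G k t \<ge> q / 2) sequentially"
proof -
  have "eventually (\<lambda>k. dist (Q (u0 k)) \<sigma> < \<sigma>) sequentially"
    using Qs_lim \<sigma> by (intro tendstoD) auto
  thus ?thesis
  proof eventually_elim
    case (elim k)
    hence Qs: "Q (u0 k) \<le> 2 * \<sigma>" by (auto simp: dist_real_def)
    show ?case
    proof (intro allI impI)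
      fix t assume t: "0 < t \<and> t \<le> d * u0 k"
      have s: "u0 k > 0" by (rule s_pos)
      have Qs0: "Q (u0 k) \<ge> 0" using qQ[OF s] q by simp
      have "t * RR Q (u0 k) = (t / u0 k) * Q (u0 k)" unfolding RR_def by simp
      also have "\<dots> \<le> d * (2 * \<sigma>)"
      proof (rule mult_mono)
        show "t / u0 k \<le> d" using t s by (simp add: divide_le_eq)
      qed (use Qs Qs0 d in auto)
      also have "\<dots> \<le> q / 2" using d \<sigma> by (simp add: field_simps)
      finally show "G k t \<ge> q / 2" unfolding G_def using qQ[of t] t by simp
    qed
  qed
qed

end

context setting begin

definition a where "a = sqrt (\<sigma> / 2)"

lemma a_pos: "a > 0" using \<sigma> unfolding a_def by simp
lemma a_sq: "a^2 = \<sigma>/2" using \<sigma> unfolding a_def by simp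

lemma hbound:
  assumes d: "0 < d"
    and H: "\<forall>t. d * u0 k \<le> t \<and> t \<le> u0 k \<longrightarrow> \<bar>G k t - \<sigma> * (1 - t / u0 k)\<bar> \<le> d * (1 - t / u0 k)"
    and x: "0 < x" "x < rb k" "d * u0 k \<le> u k x"
  shows "\<bar>u0 k * sqrt (1 - u k x / u0 k) - a * x\<bar> \<le> d / (2 * a) * x"
proof -
  define s where "s = u0 k"
  define v where "v = u k"
  have s: "s > 0" unfolding s_def by (rule s_pos)
  define w where "w y = 1 - v y / s" for y
  define h where "h y = sqrt (w y)" for y
  have wpos: "w y > 0" if "0 < y" for y
    using u_lt[OF that, of k] s unfolding w_def v_def s_def by (simp add: field_simps)
  have Dh: "(h has_real_derivative inverse (sqrt (w y)) / 2 * (- du k y / s)) (at y)"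
    if "0 < y" "y < rb k" for y
  proof -
    have dv: "((\<lambda>z. u k z / s) has_real_derivative du k y / s) (at y)"
      using DERIV_cdivide[OF Du[of y k], of s] that by auto
    have "(w has_real_derivative (0 - du k y / s)) (at y)"
      unfolding w_def v_def by (intro DERIV_diff DERIV_const dv)
    from DERIV_chain2[where g=w and x=y, OF DERIV_real_sqrt[OF wpos[OF that(1)]] this]
    show ?thesis unfolding h_def by simp
  qed
  have hc: "continuous_on {0..x} h" unfolding h_def w_def v_def
    using s by (intro continuous_intros u_cont) auto
  have dif: "h differentiable (at y)" if "0 < y" "y < x" for y
    using Dh[of y] that x unfolding real_differentiable_def by auto
  have "\<exists>l z. 0 < z \<and> z < x \<and> DERIV h z :> l \<and> h x - h 0 = (x - 0) * l"
    by (intro MVT) (use x hc dif in auto)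
  then obtain l z where z: "0 < z" "z < x" "DERIV h z :> l" "h x - h 0 = (x - 0) * l" by blast
  have zr: "z < rb k" using z x by simp
  have l: "l = inverse (sqrt (w z)) / 2 * (- du k z / s)"
    using DERIV_unique[OF z(3) Dh[OF z(1) zr]] .
  have h0: "h 0 = 0" unfolding h_def w_def v_def s_def using u_at0[of k] s_pos[of k] by simp
  define p where "p = s * l"
  have wz: "w z > 0" using wpos z by simp
  have duz: "du k z < 0" using du_neg[OF z(1) zr] .
  have p_eq: "p = - du k z / (2 * sqrt (w z))" unfolding p_def l using s
    by (simp add: field_simps)
  have p0: "p \<ge> 0" unfolding p_eq using duz wz by (simp add: divide_nonpos_pos)
  have psq: "p^2 = G k (v z) / (2 * w z)"
  proof -
    have "p^2 = (du k z)^2 / (4 * w z)" unfolding p_eq using wz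
      by (simp add: power_divide power_mult_distrib)
    also have "\<dots> = G k (v z) / (2 * w z)" using energy[of z k] z zr unfolding v_def by simp
    finally show ?thesis .
  qed
  have vz: "d * s \<le> v z" "v z \<le> s"
    using decr[of z x k] z x u_le[of z k] unfolding v_def s_def by auto
  have "\<bar>G k (v z) - \<sigma> * w z\<bar> \<le> d * w z"
    using H vz unfolding w_def s_def v_def by auto
  hence "\<bar>G k (v z) / (2 * w z) - \<sigma> / 2\<bar> \<le> d / 2"
  proof -
    assume A: "\<bar>G k (v z) - \<sigma> * w z\<bar> \<le> d * w z"
    have "G k (v z) / (2 * w z) - \<sigma> / 2 = (G k (v z) - \<sigma> * w z) / (2 * w z)"
      using wz by (simp add: field_simps)
    also have "\<bar>\<dots>\<bar> = \<bar>G k (v z) - \<sigma> * w z\<bar> / (2 * w z)" using wz by simp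
    also have "\<dots> \<le> d * w z / (2 * w z)" using A wz by (intro divide_right_mono) auto
    also have "\<dots> = d / 2" using wz by simp
    finally show ?thesis .
  qed
  hence pa2: "\<bar>p^2 - a^2\<bar> \<le> d / 2" unfolding psq a_sq .
  have "\<bar>p - a\<bar> \<le> d / (2 * a)"
  proof -
    have pa: "p + a > 0" using p0 a_pos by simp
    have "p^2 - a^2 = (p - a) * (p + a)" by (simp add: power2_eq_square algebra_simps)
    hence "\<bar>p^2 - a^2\<bar> = \<bar>p - a\<bar> * (p + a)" using pa by (simp add: abs_mult)
    hence "\<bar>p - a\<bar> = \<bar>p^2 - a^2\<bar> / (p + a)" using pa by simp
    also have "\<dots> \<le> (d / 2) / (p + a)" using pa2 pa by (intro divide_right_mono) auto
    also have "\<dots> \<le> (d / 2) / a" using pa p0 a_pos d by (intro divide_left_mono) auto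
    finally show ?thesis by simp
  qed
  moreover have "s * h x = x * p" using z(4) h0 unfolding p_def by simp
  hence "s * h x - a * x = x * (p - a)" by (simp add: algebra_simps)
  hence "\<bar>s * h x - a * x\<bar> = x * \<bar>p - a\<bar>" using x by (simp add: abs_mult)
  moreover have "x * \<bar>p - a\<bar> \<le> x * (d / (2 * a))"
    using calculation(1) x by (intro mult_left_mono) auto
  ultimately have "\<bar>s * h x - a * x\<bar> \<le> d / (2 * a) * x"
    by (simp add: mult.commute)
  thus ?thesis unfolding h_def w_def s_def v_def .
qed

end

context setting begin

lemma tailbound:
  assumes d: "0 < d" and T: "\<forall>t. 0 < t \<and> t \<le> d * u0 k \<longrightarrow> G k t \<ge> q / 2"
    and x: "0 \<le> x" "x < rb k" "u k x \<le> d * u0 k"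
  shows "rb k - x \<le> d * u0 k / sqrt q"
proof -
  have uc: "continuous_on {x..rb k} (u k)" by (rule u_cont)
  have dif: "u k differentiable (at y)" if "x < y" "y < rb k" for y
  proof -
    have "\<bar>y\<bar> < rb k" using that x by auto
    from Du[OF this] show ?thesis unfolding real_differentiable_def by (rule exI)
  qed
  have "\<exists>l z. x < z \<and> z < rb k \<and> DERIV (u k) z :> l \<and> u k (rb k) - u k x = (rb k - x) * l"
    by (intro MVT) (use x uc dif in auto)
  then obtain l z where z: "x < z" "z < rb k" "DERIV (u k) z :> l" "u k (rb k) - u k x = (rb k - x) * l"
    by blast
  have za: "\<bar>z\<bar> < rb k" using z x by auto
  have l: "l = du k z" using DERIV_unique[OF z(3) Du[OF za]] .
  have uz: "0 < u k z" "u k z \<le> u k x" using u_pos[OF za] decr[of x z k] z x by auto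
  have "G k (u k z) \<ge> q / 2" using T uz x by auto
  hence "sqrt q \<le> sqrt (2 * G k (u k z))" by simp
  also have "\<dots> = - l" using du_form[of z k] z x l by simp
  finally have lq: "sqrt q \<le> - l" .
  have "u k x = (rb k - x) * (- l)" using z(4) u_r[of k] by (simp add: algebra_simps)
  also have "\<dots> \<ge> (rb k - x) * sqrt q" using lq x by (intro mult_left_mono) auto
  finally have "(rb k - x) * sqrt q \<le> d * u0 k" using x by linarith
  thus ?thesis using q by (simp add: le_divide_eq)
qed

definition e where "e d = d / (2 * a)"
definition lo where "lo d = sqrt (1 - d) / (a + e d)"
definition hi where "hi d = sqrt (1 - d) / (a - e d) + d / sqrt q"
definition d1 where "d1 = min (1/2) (min (q / (4 * \<sigma>)) \<sigma>)"

lemma d1_pos: "d1 > 0" using q \<sigma> unfolding d1_def by auto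

lemma e_small: "0 < d \<Longrightarrow> d < d1 \<Longrightarrow> 0 < e d \<and> e d < a"
proof -
  assume d: "0 < d" "d < d1"
  have "d < \<sigma>" using d unfolding d1_def by auto
  hence "d < 2 * a^2" using a_sq by simp
  thus ?thesis using d a_pos unfolding e_def by (simp add: field_simps power2_eq_square)
qed

lemma bounds:
  assumes d: "0 < d" "d < d1"
  shows "eventually (\<lambda>k. lo d \<le> rb k / u0 k \<and> rb k / u0 k \<le> hi d \<and>
     (\<forall>x. 0 < x \<and> x < rb k \<and> d * u0 k \<le> u k x \<longrightarrow> \<bar>u0 k * sqrt (1 - u k x / u0 k) - a * x\<bar> \<le> e d * x) \<and>
     (\<forall>x. 0 \<le> x \<and> x < rb k \<and> u k x < d * u0 k \<longrightarrow> u0 k * sqrt (1 - d) \<le> (a + e d) * x)) sequentially"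
proof -
  have d12: "d < 1/2" "d \<le> q / (4 * \<sigma>)" using d unfolding d1_def by auto
  have ed: "0 < e d" "e d < a" using e_small[OF d] by auto
  have "eventually (\<lambda>k. (\<forall>t. d * u0 k \<le> t \<and> t \<le> u0 k \<longrightarrow>
      \<bar>G k t - \<sigma> * (1 - t / u0 k)\<bar> \<le> d * (1 - t / u0 k)) \<and>
      (\<forall>t. 0 < t \<and> t \<le> d * u0 k \<longrightarrow> G k t \<ge> q / 2)) sequentially"
    using KE[OF d(1)] TE[OF d(1) d12(2)] by (rule eventually_conj)
  thus ?thesis
  proof (rule eventually_mono, elim conjE)
    fix k
    assume H: "\<forall>t. d * u0 k \<le> t \<and> t \<le> u0 k \<longrightarrow> \<bar>G k t - \<sigma> * (1 - t / u0 k)\<bar> \<le> d * (1 - t / u0 k)"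
      and T: "\<forall>t. 0 < t \<and> t \<le> d * u0 k \<longrightarrow> G k t \<ge> q / 2"
    define s where "s = u0 k"
    define r where "r = rb k"
    have s: "s > 0" unfolding s_def by (rule s_pos)
    have r: "r > 0" unfolding r_def by (rule r_pos)
    have HB: "\<forall>x. 0 < x \<and> x < rb k \<and> d * u0 k \<le> u k x \<longrightarrow> \<bar>u0 k * sqrt (1 - u k x / u0 k) - a * x\<bar> \<le> e d * x"
      using hbound[OF d(1) H] unfolding e_def by blast
    have crit: "\<exists>y. 0 < y \<and> y \<le> x \<and> u k y = d * s" if x: "0 \<le> x" "x \<le> r" "u k x \<le> d * s" for x
    proof -
      have "u k x \<le> d * s" "d * s \<le> u k 0" "0 \<le> x" using x u_at0[of k] s d12 unfolding s_def
        by (auto simp: mult_le_cancel_right1)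
      from IVT2'[of "u k" x "d * s" 0, OF this u_cont] obtain y where y: "0 \<le> y" "y \<le> x" "u k y = d * s"
        by blast
      have "y \<noteq> 0" using y u_at0[of k] s d12 unfolding s_def by auto
      thus ?thesis using y by (intro exI[of _ y]) auto
    qed
    obtain xd where xd: "0 < xd" "xd \<le> r" "u k xd = d * s"
      using crit[of r] r u_r[of k] s d unfolding r_def by auto
    have "xd \<noteq> r"
    proof
      assume "xd = r" hence "d * s = 0" using xd(3) u_r[of k] unfolding r_def by simp
      thus False using s d by simp
    qed
    hence xdr: "xd < r" using xd(2) by simp
    have "\<bar>s * sqrt (1 - d) - a * xd\<bar> \<le> e d * xd"
      using HB[rule_format, of xd] xd xdr s unfolding s_def r_def by auto
    hence xd1: "s * sqrt (1 - d) \<le> (a + e d) * xd" and xd2: "(a - e d) * xd \<le> s * sqrt (1 - d)"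
      by (auto simp: algebra_simps abs_le_iff)
    have tl: "r - xd \<le> d * s / sqrt q"
      using tailbound[OF d(1) T, of xd] xd xdr unfolding r_def s_def by auto
    have lo: "lo d \<le> r / s"
    proof -
      have "lo d \<le> xd / s" unfolding lo_def using xd1 s ed a_pos
        by (simp add: divide_le_eq le_divide_eq mult.commute)
      also have "\<dots> \<le> r / s" using xdr s by (simp add: divide_right_mono)
      finally show ?thesis .
    qed
    have hi: "r / s \<le> hi d"
    proof -
      have "r / s \<le> xd / s + d / sqrt q" using tl s q by (simp add: field_simps)
      moreover have "xd / s \<le> sqrt (1 - d) / (a - e d)" using xd2 s ed
        by (simp add: divide_le_eq le_divide_eq mult.commute)
      ultimately show ?thesis unfolding hi_def by linarith
    qed
    have P4: "\<forall>x. 0 \<le> x \<and> x < rb k \<and> u k x < d * u0 k \<longrightarrow> u0 k * sqrt (1 - d) \<le> (a + e d) * x"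
    proof (intro allI impI, elim conjE)
      fix x assume x: "0 \<le> x" "x < rb k" "u k x < d * u0 k"
      obtain y where y: "0 < y" "y \<le> x" "u k y = d * s" using crit[of x] x unfolding r_def s_def by auto
      have "\<bar>s * sqrt (1 - d) - a * y\<bar> \<le> e d * y"
        using HB[rule_format, of y] y x s unfolding s_def by auto
      hence "s * sqrt (1 - d) \<le> (a + e d) * y" by (auto simp: algebra_simps abs_le_iff)
      also have "\<dots> \<le> (a + e d) * x" using y ed a_pos by (intro mult_left_mono) auto
      finally show "u0 k * sqrt (1 - d) \<le> (a + e d) * x" unfolding s_def .
    qed
    show "lo d \<le> rb k / u0 k \<and> rb k / u0 k \<le> hi d \<and>
     (\<forall>x. 0 < x \<and> x < rb k \<and> d * u0 k \<le> u k x \<longrightarrow> \<bar>u0 k * sqrt (1 - u k x / u0 k) - a * x\<bar> \<le> e d * x) \<and>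
     (\<forall>x. 0 \<le> x \<and> x < rb k \<and> u k x < d * u0 k \<longrightarrow> u0 k * sqrt (1 - d) \<le> (a + e d) * x)"
      using lo hi HB P4 unfolding r_def s_def by blast
  qed
qed

lemma lo_lim: "(lo \<longlongrightarrow> 1 / a) (at_right 0)"
proof -
  have "((\<lambda>d. sqrt (1 - d) / (a + d / (2 * a))) \<longlongrightarrow> sqrt (1 - 0) / (a + 0 / (2 * a))) (at_right 0)"
    using a_pos by (intro tendsto_intros) auto
  thus ?thesis unfolding lo_def e_def by simp
qed

lemma hi_lim: "(hi \<longlongrightarrow> 1 / a) (at_right 0)"
proof -
  have "((\<lambda>d. sqrt (1 - d) / (a - d / (2 * a)) + d / sqrt q) \<longlongrightarrow> sqrt (1 - 0) / (a - 0 / (2 * a)) + 0 / sqrt q) (at_right 0)"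
    using a_pos q by (intro tendsto_intros) auto
  thus ?thesis unfolding hi_def e_def by simp
qed

lemma e_lim: "(e \<longlongrightarrow> 0) (at_right 0)"
proof -
  have "((\<lambda>d. d / (2 * a)) \<longlongrightarrow> 0 / (2 * a)) (at_right 0)"
    using a_pos by (intro tendsto_intros) auto
  thus ?thesis unfolding e_def by simp
qed

lemma L1: "(\<lambda>k. rb k / u0 k) \<longlonglongrightarrow> 1 / a"
proof (rule squeeze_param[OF d1_pos _ lo_lim hi_lim])
  fix d :: real assume "0 < d" "d < d1"
  from bounds[OF this] show "eventually (\<lambda>k. lo d \<le> rb k / u0 k \<and> rb k / u0 k \<le> hi d) sequentially"
    by (rule eventually_mono) blast
qed

end

lemma arith_core:
  fixes s r y a e lo hi H :: real
  assumes s: "s > 0" and a: "a > 0" and e: "e \<ge> 0" and y: "0 \<le> y" "y \<le> 1"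
    and lh: "lo \<le> r / s" "r / s \<le> hi" and r: "r \<ge> 0"
    and B: "\<bar>s * H - a * (r * y)\<bar> \<le> e * (r * y)"
  shows "\<bar>H - y\<bar> \<le> e * hi + a * (\<bar>hi - 1/a\<bar> + \<bar>lo - 1/a\<bar>)"
proof -
  define p where "p = r / s"
  have p0: "p \<ge> 0" unfolding p_def using r s by simp
  have eq: "s * H - a * (r * y) = s * (H - a * p * y)" unfolding p_def using s by (simp add: field_simps)
  have "s * \<bar>H - a * p * y\<bar> = \<bar>s * H - a * (r * y)\<bar>" unfolding eq using s by (simp add: abs_mult)
  also have "\<dots> \<le> e * (r * y)" by (rule B)
  also have "\<dots> = s * (e * p * y)" unfolding p_def using s by simp
  finally have "s * \<bar>H - a * p * y\<bar> \<le> s * (e * p * y)" .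
  hence B1: "\<bar>H - a * p * y\<bar> \<le> e * p * y" using s by simp
  have "e * p * y \<le> e * p" using e p0 y by (simp add: mult_left_le)
  also have "\<dots> \<le> e * hi"
  proof -
    have "p \<le> hi" using lh unfolding p_def by simp
    thus ?thesis using e by (rule mult_left_mono)
  qed
  finally have B2: "\<bar>H - a * p * y\<bar> \<le> e * hi" using B1 by linarith
  have "a * p * y - y = a * (p - 1/a) * y" using a by (simp add: field_simps)
  hence "\<bar>a * p * y - y\<bar> = a * \<bar>p - 1/a\<bar> * y" using a y by (simp add: abs_mult)
  also have "\<dots> \<le> a * \<bar>p - 1/a\<bar>" using a y by (simp add: mult_left_le)
  also have "\<dots> \<le> a * (\<bar>hi - 1/a\<bar> + \<bar>lo - 1/a\<bar>)"
    using lh a unfolding p_def by (intro mult_left_mono) auto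
  finally show ?thesis using B2 by linarith
qed

context setting begin

lemma L2:
  assumes \<rho>: "0 \<le> \<rho>" "\<rho> < 1"
  shows "uniform_limit {0..\<rho>} (\<lambda>k y. u k (rb k * y) / u0 k) (\<lambda>y. 1 - y^2) sequentially"
proof (rule uniform_limitI)
  fix \<epsilon> :: real assume \<epsilon>: "\<epsilon> > 0"
  define e2 where "e2 d = e d * hi d + a * (\<bar>hi d - 1/a\<bar> + \<bar>lo d - 1/a\<bar>)" for d
  have "((\<lambda>d. (a + e d) * \<rho> * hi d - sqrt (1 - d)) \<longlongrightarrow> (a + 0) * \<rho> * (1/a) - sqrt (1 - 0)) (at_right 0)"
    by (intro tendsto_intros e_lim hi_lim)
  moreover have "(a + 0) * \<rho> * (1/a) - sqrt (1 - 0) = \<rho> - 1" using a_pos by simp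
  ultimately have "eventually (\<lambda>d. (a + e d) * \<rho> * hi d - sqrt (1 - d) < 0) (at_right 0)"
    using \<rho> by (intro order_tendstoD) auto
  moreover have "((\<lambda>d. 2 * e2 d) \<longlongrightarrow> 2 * (0 * (1/a) + a * (\<bar>1/a - 1/a\<bar> + \<bar>1/a - 1/a\<bar>))) (at_right 0)"
    unfolding e2_def by (intro tendsto_intros e_lim hi_lim lo_lim)
  hence "eventually (\<lambda>d. 2 * e2 d < \<epsilon>) (at_right 0)"
    using \<epsilon> by (intro order_tendstoD) auto
  moreover have "eventually (\<lambda>d. d < d1) (at_right (0::real))"
    unfolding eventually_at_right_field using d1_pos by (intro exI[of _ d1]) auto
  moreover have "eventually (\<lambda>d. d > 0) (at_right (0::real))"
    by (simp add: eventually_at_right_less)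
  ultimately have "eventually (\<lambda>d. (a + e d) * \<rho> * hi d - sqrt (1 - d) < 0 \<and> 2 * e2 d < \<epsilon> \<and> d < d1 \<and> d > 0) (at_right 0)"
    by (intro eventually_conj)
  then obtain d where d: "(a + e d) * \<rho> * hi d < sqrt (1 - d)" "2 * e2 d < \<epsilon>" "d < d1" "d > 0"
    using ev_at_right_ex[of "\<lambda>d. (a + e d) * \<rho> * hi d - sqrt (1 - d) < 0 \<and> 2 * e2 d < \<epsilon> \<and> d < d1 \<and> d > 0"]
    by auto
  have ed: "0 < e d" "e d < a" using e_small[OF d(4,3)] by auto
  show "eventually (\<lambda>k. \<forall>y\<in>{0..\<rho>}. dist (u k (rb k * y) / u0 k) (1 - y^2) < \<epsilon>) sequentially"
    using bounds[OF d(4,3)]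
  proof (rule eventually_mono, elim conjE, intro ballI)
    fix k y
    assume lo: "lo d \<le> rb k / u0 k" and hi: "rb k / u0 k \<le> hi d"
      and HB: "\<forall>x. 0 < x \<and> x < rb k \<and> d * u0 k \<le> u k x \<longrightarrow> \<bar>u0 k * sqrt (1 - u k x / u0 k) - a * x\<bar> \<le> e d * x"
      and P4: "\<forall>x. 0 \<le> x \<and> x < rb k \<and> u k x < d * u0 k \<longrightarrow> u0 k * sqrt (1 - d) \<le> (a + e d) * x"
      and y: "y \<in> {0..\<rho>}"
    define s where "s = u0 k"
    define r where "r = rb k"
    have s: "s > 0" unfolding s_def by (rule s_pos)
    have r: "r > 0" unfolding r_def by (rule r_pos)
    have y01: "0 \<le> y" "y \<le> \<rho>" "y < 1" using y \<rho> by auto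
    have xr: "r * y < r" using r y01 by simp
    show "dist (u k (rb k * y) / u0 k) (1 - y^2) < \<epsilon>"
    proof (cases "y = 0")
      case True thus ?thesis using u_at0[of k] s_pos[of k] \<epsilon> by simp
    next
      case False
      hence ypos: "y > 0" using y01 by simp
      have x0: "0 < r * y" using r ypos by simp
      have big: "d * s \<le> u k (r * y)"
      proof (rule ccontr)
        assume "\<not> d * s \<le> u k (r * y)"
        hence "s * sqrt (1 - d) \<le> (a + e d) * (r * y)"
          using P4[rule_format, of "r * y"] x0 xr unfolding s_def r_def by auto
        also have "\<dots> \<le> (a + e d) * (r * \<rho>)"
          using ed a_pos r y01 by (intro mult_left_mono) auto
        also have "r * \<rho> \<le> s * hi d * \<rho>"
        proof -
          have "r \<le> s * hi d" using hi s unfolding r_def s_def by (simp add: divide_le_eq mult.commute)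
          thus ?thesis using \<rho> by (intro mult_right_mono) auto
        qed
        hence "(a + e d) * (r * \<rho>) \<le> (a + e d) * (s * hi d * \<rho>)"
          using ed a_pos by (intro mult_left_mono) auto
        finally have "s * sqrt (1 - d) \<le> s * ((a + e d) * \<rho> * hi d)" by (simp add: algebra_simps)
        hence "sqrt (1 - d) \<le> (a + e d) * \<rho> * hi d" using s by simp
        thus False using d(1) by simp
      qed
      define H where "H = sqrt (1 - u k (r * y) / s)"
      have ul: "0 \<le> u k (r * y)" "u k (r * y) \<le> s" using u_nonneg u_le[of "r * y" k] x0 unfolding s_def by auto
      have H01: "0 \<le> H" "H \<le> 1" unfolding H_def using ul s by auto
      have Hsq: "H^2 = 1 - u k (r * y) / s" unfolding H_def using ul s by simp
      have B: "\<bar>s * H - a * (r * y)\<bar> \<le> e d * (r * y)"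
        using HB[rule_format, of "r * y"] x0 xr big unfolding H_def s_def r_def by auto
      have Hy: "\<bar>H - y\<bar> \<le> e2 d" unfolding e2_def
        by (rule arith_core[OF s a_pos _ _ _ lo[folded s_def r_def] hi[folded s_def r_def] _ B])
           (use ed y01 r in auto)
      have "u k (r * y) / s - (1 - y^2) = (y - H) * (y + H)" using Hsq by (simp add: algebra_simps power2_eq_square)
      hence "\<bar>u k (r * y) / s - (1 - y^2)\<bar> = \<bar>H - y\<bar> * (y + H)" using H01 y01 by (simp add: abs_mult abs_minus_commute)
      also have "\<dots> \<le> e2 d * 2" using Hy H01 y01 by (intro mult_mono) auto
      finally show ?thesis using d(2) unfolding dist_real_def s_def r_def by simp
    qed
  qed
qed

end

lemma ul_seq:
  fixes X :: "nat \<Rightarrow> real"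
  assumes "X \<longlonglongrightarrow> L"
  shows "uniform_limit S (\<lambda>k y. X k) (\<lambda>y. L) sequentially"
proof (rule uniform_limitI)
  fix e :: real assume "e > 0"
  from tendstoD[OF assms this] show "eventually (\<lambda>k. \<forall>y\<in>S. dist (X k) L < e) sequentially"
    by (rule eventually_mono) auto
qed

lemma sqrt_diff_le: "0 \<le> x \<Longrightarrow> 0 \<le> y \<Longrightarrow> \<bar>sqrt x - sqrt y\<bar> \<le> sqrt \<bar>x - y\<bar>"
proof -
  have *: "sqrt x - sqrt y \<le> sqrt \<bar>x - y\<bar>" if "0 \<le> x" "0 \<le> y" for x y :: real
  proof (cases "y \<le> x")
    case True
    have "sqrt x = sqrt (y + (x - y))" by simp
    also have "\<dots> \<le> sqrt y + sqrt (x - y)" using that True by (intro sqrt_add_le_add_sqrt) auto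
    finally show ?thesis using True by simp
  next
    case False
    hence "sqrt x \<le> sqrt y" by simp
    thus ?thesis by (smt (verit) real_sqrt_ge_zero abs_ge_zero)
  qed
  assume "0 \<le> x" "0 \<le> y"
  thus ?thesis using *[of x y] *[of y x] by (simp add: abs_le_iff abs_minus_commute)
qed

lemma ul_sqrt:
  fixes f :: "nat \<Rightarrow> real \<Rightarrow> real"
  assumes ul: "uniform_limit S f g sequentially"
    and f0: "\<And>k y. y \<in> S \<Longrightarrow> f k y \<ge> 0" and g0: "\<And>y. y \<in> S \<Longrightarrow> g y \<ge> 0"
  shows "uniform_limit S (\<lambda>k y. sqrt (f k y)) (\<lambda>y. sqrt (g y)) sequentially"
proof (rule uniform_limitI)
  fix e :: real assume e: "e > 0"
  have "eventually (\<lambda>k. \<forall>y\<in>S. dist (f k y) (g y) < e^2) sequentially"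
    using uniform_limitD[OF ul] e by simp
  thus "eventually (\<lambda>k. \<forall>y\<in>S. dist (sqrt (f k y)) (sqrt (g y)) < e) sequentially"
  proof (rule eventually_mono, intro ballI)
    fix k y assume H: "\<forall>y\<in>S. dist (f k y) (g y) < e^2" and y: "y \<in> S"
    have "\<bar>sqrt (f k y) - sqrt (g y)\<bar> \<le> sqrt \<bar>f k y - g y\<bar>"
      using f0[OF y] g0[OF y] by (rule sqrt_diff_le)
    also have "\<dots> < sqrt (e^2)" using H y by (intro real_sqrt_less_mono) (simp add: dist_real_def)
    also have "\<dots> = e" using e by simp
    finally show "dist (sqrt (f k y)) (sqrt (g y)) < e" by (simp add: dist_real_def)
  qed
qed

lemma ul_reflect:
  fixes F :: "nat \<Rightarrow> real \<Rightarrow> real"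
  assumes "uniform_limit {0..\<rho>} F f sequentially"
  shows "uniform_limit {-\<rho>..0} (\<lambda>k y. F k (-y)) (\<lambda>y. f (-y)) sequentially"
proof (rule uniform_limitI)
  fix e :: real assume "e > 0"
  from uniform_limitD[OF assms this]
  show "eventually (\<lambda>k. \<forall>y\<in>{-\<rho>..0}. dist (F k (-y)) (f (-y)) < e) sequentially"
    by (rule eventually_mono) auto
qed

context setting begin

lemma refl_setting: "setting Q dQ \<sigma> q u0 (\<lambda>k x. u k (-x)) rb"
  by unfold_locales (use D \<sigma> Qlim sdQ q qQ A lim sol_reflect[OF sol] in auto)

lemma u_le_all: "u k x \<le> u0 k"
proof (cases "x \<ge> 0")
  case True thus ?thesis by (rule u_le)
next
  case False
  hence "0 \<le> -x" by simp
  from setting.u_le[OF refl_setting this] show ?thesis by simp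
qed

lemma du_pos: "- rb k < x \<Longrightarrow> x < 0 \<Longrightarrow> du k x > 0"
proof -
  assume x: "- rb k < x" "x < 0"
  let ?w = "setting.du Q dQ u0 (\<lambda>k x. u k (-x)) rb k (-x)"
  have "\<bar>-x\<bar> < rb k" using x by auto
  have D1: "((\<lambda>y. u k (-y)) has_real_derivative ?w) (at (-x))"
    using setting.Du[OF refl_setting \<open>\<bar>-x\<bar> < rb k\<close>] by simp
  have D2: "((\<lambda>y. u k (-y)) has_real_derivative - du k x) (at (-x))"
    using Du[of x k] x DERIV_mirror[where f="u k" and x="-x" and y="du k x"] by simp
  have "?w = - du k x" using DERIV_unique[OF D1 D2] .
  moreover have "?w < 0" using setting.du_neg[OF refl_setting, of "-x" k] x by simp
  ultimately show ?thesis by simp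
qed

lemma du_form_neg: "- rb k < x \<Longrightarrow> x \<le> 0 \<Longrightarrow> du k x = sqrt (2 * G k (u k x))"
proof -
  assume x: "- rb k < x" "x \<le> 0"
  have e: "(du k x)^2 = 2 * G k (u k x)" using energy[of x k] x r_pos[of k] by auto
  show ?thesis
  proof (cases "x = 0")
    case True thus ?thesis using du0 u_at0 G_s by simp
  next
    case False
    hence "du k x > 0" using du_pos[of k x] x by auto
    have "sqrt (2 * G k (u k x)) = du k x"
      using e[symmetric] real_sqrt_abs[of "du k x"] \<open>du k x > 0\<close> by simp
    thus ?thesis by simp
  qed
qed

lemma U1:
  assumes \<rho>: "0 \<le> \<rho>" "\<rho> < 1"
  shows "uniform_limit {-\<rho>..\<rho>} (\<lambda>k y. u k (rb k * y) / u0 k) (\<lambda>y. 1 - y^2) sequentially"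
proof -
  have "uniform_limit {-\<rho>..0} (\<lambda>k y. u k (- (rb k * (- y))) / u0 k) (\<lambda>y. 1 - (-y)^2) sequentially"
    using ul_reflect[OF setting.L2[OF refl_setting \<rho>]] by simp
  hence A: "uniform_limit {-\<rho>..0} (\<lambda>k y. u k (rb k * y) / u0 k) (\<lambda>y. 1 - y^2) sequentially"
    by simp
  have "{-\<rho>..\<rho>} = {-\<rho>..0} \<union> {0..\<rho>}" using \<rho> by auto
  thus ?thesis using uniform_limit_on_Un[OF A L2[OF \<rho>]] by simp
qed

lemma Dphi:
  assumes y: "\<bar>y\<bar> < 1"
  shows "((\<lambda>y. u k (rb k * y) / u0 k) has_real_derivative rb k * du k (rb k * y) / u0 k) (at y)"
proof -
  have r: "rb k > 0" by (rule r_pos)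
  have "\<bar>rb k * y\<bar> < rb k" using y r by (simp add: abs_mult)
  from DERIV_chain2[OF Du[OF this] DERIV_cmult_Id[of "rb k" y]]
  have "((\<lambda>y. u k (rb k * y)) has_real_derivative du k (rb k * y) * rb k) (at y)" .
  from DERIV_cdivide[OF this, of "u0 k"] show ?thesis by (simp add: mult.commute)
qed

lemma deriv_phi: "\<bar>y\<bar> < 1 \<Longrightarrow> deriv (\<lambda>y. u k (rb k * y) / u0 k) y = rb k * du k (rb k * y) / u0 k"
  by (rule DERIV_imp_deriv[OF Dphi])

lemma deriv2_phi:
  assumes y: "\<bar>y\<bar> < 1"
  shows "deriv (deriv (\<lambda>y. u k (rb k * y) / u0 k)) y = rb k^2 * (dQ (u k (rb k * y)) - RR Q (u0 k)) / u0 k"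
proof -
  have r: "rb k > 0" by (rule r_pos)
  have "\<bar>rb k * y\<bar> < rb k" using y r by (simp add: abs_mult)
  from DERIV_chain2[OF Ddu[OF this] DERIV_cmult_Id[of "rb k" y]]
  have "((\<lambda>y. du k (rb k * y)) has_real_derivative (dQ (u k (rb k * y)) - RR Q (u0 k)) * rb k) (at y)" .
  from DERIV_cdivide[OF DERIV_cmult[OF this, of "rb k"], of "u0 k"]
  have D1: "((\<lambda>y. rb k * du k (rb k * y) / u0 k) has_real_derivative
      rb k^2 * (dQ (u k (rb k * y)) - RR Q (u0 k)) / u0 k) (at y)"
    by (simp add: power2_eq_square algebra_simps)
  have "(deriv (\<lambda>y. u k (rb k * y) / u0 k) has_real_derivative
      rb k^2 * (dQ (u k (rb k * y)) - RR Q (u0 k)) / u0 k) (at y)"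
  proof (rule has_field_derivative_transform_within_open[OF D1, of "{-1<..<1}"])
    show "y \<in> {-1<..<1}" using y by auto
    fix z :: real assume "z \<in> {-1<..<1}"
    hence "\<bar>z\<bar> < 1" by auto
    thus "rb k * du k (rb k * z) / u0 k = deriv (\<lambda>y. u k (rb k * y) / u0 k) z"
      using deriv_phi by simp
  qed auto
  thus ?thesis by (rule DERIV_imp_deriv)
qed

end

lemma bounded_const_img: "bounded ((\<lambda>y. c) ` S)"
  by (rule bounded_subset[of "{c}"]) auto

lemma bounded_cont_img: "continuous_on {a..b} f \<Longrightarrow> bounded (f ` {a..b :: real})"
  by (intro compact_imp_bounded compact_continuous_image compact_Icc)

context setting begin

lemma phi_lb:
  assumes \<rho>: "0 \<le> \<rho>" "\<rho> < 1"
  shows "eventually (\<lambda>k. \<forall>y\<in>{-\<rho>..\<rho>}. u k (rb k * y) \<ge> (1 - \<rho>^2) / 2 * u0 k) sequentially"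
proof -
  have c: "(1 - \<rho>^2) / 2 > 0" using \<rho> by (simp add: power_less_one_iff abs_square_less_1)
  from uniform_limitD[OF U1[OF \<rho>] c] show ?thesis
  proof (rule eventually_mono, intro ballI)
    fix k y assume H: "\<forall>y\<in>{-\<rho>..\<rho>}. dist (u k (rb k * y) / u0 k) (1 - y^2) < (1 - \<rho>^2) / 2"
      and y: "y \<in> {-\<rho>..\<rho>}"
    have "\<bar>y\<bar> \<le> \<rho>" using y by auto
    hence "\<bar>y\<bar>^2 \<le> \<rho>^2" by (intro power_mono) auto
    hence "y^2 \<le> \<rho>^2" by simp
    have "\<bar>u k (rb k * y) / u0 k - (1 - y^2)\<bar> < (1 - \<rho>^2) / 2" using H y by (simp add: dist_real_def)
    hence "- (u k (rb k * y) / u0 k - (1 - y^2)) < (1 - \<rho>^2) / 2" by (simp only: abs_less_iff)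
    moreover have "(1 - \<rho>^2) / 2 = 1/2 - \<rho>^2 / 2" by simp
    ultimately have "u k (rb k * y) / u0 k \<ge> (1 - \<rho>^2) / 2" using \<open>y^2 \<le> \<rho>^2\<close> by linarith
    thus "u k (rb k * y) \<ge> (1 - \<rho>^2) / 2 * u0 k" using s_pos[of k] by (simp add: le_divide_eq)
  qed
qed

lemma UG:
  assumes \<rho>: "0 \<le> \<rho>" "\<rho> < 1"
  shows "uniform_limit {-\<rho>..\<rho>} (\<lambda>k y. G k (u k (rb k * y))) (\<lambda>y. \<sigma> * y^2) sequentially"
proof (rule uniform_limitI)
  fix \<epsilon> :: real assume \<epsilon>: "\<epsilon> > 0"
  define c where "c = (1 - \<rho>^2) / 2"
  have c: "c > 0" unfolding c_def using \<rho> by (simp add: power_less_one_iff abs_square_less_1)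
  define d where "d = min c (\<epsilon> / 2)"
  have d: "d > 0" "d \<le> c" "d \<le> \<epsilon> / 2" using c \<epsilon> unfolding d_def by auto
  have e2: "\<epsilon> / (2 * \<sigma>) > 0" using \<epsilon> \<sigma> by simp
  have "eventually (\<lambda>k. (\<forall>t. d * u0 k \<le> t \<and> t \<le> u0 k \<longrightarrow> \<bar>G k t - \<sigma> * (1 - t / u0 k)\<bar> \<le> d * (1 - t / u0 k))
     \<and> (\<forall>y\<in>{-\<rho>..\<rho>}. u k (rb k * y) \<ge> c * u0 k)
     \<and> (\<forall>y\<in>{-\<rho>..\<rho>}. dist (u k (rb k * y) / u0 k) (1 - y^2) < \<epsilon> / (2 * \<sigma>))) sequentially"
    using KE[OF d(1)] phi_lb[OF \<rho>] uniform_limitD[OF U1[OF \<rho>] e2] unfolding c_def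
    by (intro eventually_conj)
  thus "eventually (\<lambda>k. \<forall>y\<in>{-\<rho>..\<rho>}. dist (G k (u k (rb k * y))) (\<sigma> * y^2) < \<epsilon>) sequentially"
  proof (rule eventually_mono, elim conjE, intro ballI)
    fix k y
    assume H: "\<forall>t. d * u0 k \<le> t \<and> t \<le> u0 k \<longrightarrow> \<bar>G k t - \<sigma> * (1 - t / u0 k)\<bar> \<le> d * (1 - t / u0 k)"
      and lb: "\<forall>y\<in>{-\<rho>..\<rho>}. u k (rb k * y) \<ge> c * u0 k"
      and U: "\<forall>y\<in>{-\<rho>..\<rho>}. dist (u k (rb k * y) / u0 k) (1 - y^2) < \<epsilon> / (2 * \<sigma>)"
      and y: "y \<in> {-\<rho>..\<rho>}"
    define t where "t = u k (rb k * y)"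
    define s where "s = u0 k"
    have s: "s > 0" unfolding s_def by (rule s_pos)
    have t: "d * s \<le> t" "t \<le> s" "0 \<le> t"
      using lb y d s u_le_all[of k "rb k * y"] u_nonneg[of k "rb k * y"]
      unfolding t_def s_def by (auto intro: order_trans[OF mult_right_mono[OF d(2)]])
    have A1: "\<bar>G k t - \<sigma> * (1 - t / s)\<bar> \<le> d * (1 - t / s)" using H t unfolding s_def by auto
    have "1 - t / s \<le> 1" "0 \<le> 1 - t / s" using t s by auto
    hence "d * (1 - t / s) \<le> d" using d by (simp add: mult_left_le)
    hence A1': "\<bar>G k t - \<sigma> * (1 - t / s)\<bar> \<le> \<epsilon> / 2" using A1 d by linarith
    have ab: "\<bar>t / s - (1 - y^2)\<bar> < \<epsilon> / (2 * \<sigma>)" using U y unfolding t_def s_def by (auto simp: dist_real_def)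
    have lt: "\<sigma> * \<bar>t / s - (1 - y^2)\<bar> < \<sigma> * (\<epsilon> / (2 * \<sigma>))" using mult_strict_left_mono[OF ab \<sigma>] .
    have "\<sigma> * (1 - t / s) - \<sigma> * y^2 = - (\<sigma> * (t / s - (1 - y^2)))" by (simp add: algebra_simps)
    hence "\<bar>\<sigma> * (1 - t / s) - \<sigma> * y^2\<bar> = \<sigma> * \<bar>t / s - (1 - y^2)\<bar>" using \<sigma> by (simp add: abs_mult)
    moreover have "\<sigma> * (\<epsilon> / (2 * \<sigma>)) = \<epsilon> / 2" using \<sigma> by simp
    ultimately have A2: "\<bar>\<sigma> * (1 - t / s) - \<sigma> * y^2\<bar> < \<epsilon> / 2" using lt by simp
    have "\<bar>G k t - \<sigma> * y^2\<bar> < \<epsilon>" using A1' A2 by linarith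
    thus "dist (G k (u k (rb k * y))) (\<sigma> * y^2) < \<epsilon>" unfolding t_def dist_real_def .
  qed
qed

lemma G_nonneg: "\<bar>x\<bar> < rb k \<Longrightarrow> G k (u k x) \<ge> 0"
proof -
  assume "\<bar>x\<bar> < rb k"
  from energy[OF this] have "2 * G k (u k x) \<ge> 0" by (metis zero_le_power2)
  thus ?thesis by simp
qed

lemma UD2:
  assumes \<rho>: "0 \<le> \<rho>" "\<rho> < 1"
  shows "uniform_limit {-\<rho>..\<rho>} (\<lambda>k y. sqrt ((rb k / u0 k)^2 * 2 * G k (u k (rb k * y)))) (\<lambda>y. 2 * \<bar>y\<bar>) sequentially"
proof -
  have c: "(\<lambda>k. (rb k / u0 k)^2 * 2) \<longlonglongrightarrow> (1/a)^2 * 2" by (intro tendsto_intros L1)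
  have "uniform_limit {-\<rho>..\<rho>} (\<lambda>k y. (rb k / u0 k)^2 * 2 * G k (u k (rb k * y))) (\<lambda>y. (1/a)^2 * 2 * (\<sigma> * y^2)) sequentially"
    by (rule uniform_lim_mult[OF ul_seq[OF c] UG[OF \<rho>] bounded_const_img bounded_cont_img])
       (intro continuous_intros)
  hence "uniform_limit {-\<rho>..\<rho>} (\<lambda>k y. sqrt ((rb k / u0 k)^2 * 2 * G k (u k (rb k * y)))) (\<lambda>y. sqrt ((1/a)^2 * 2 * (\<sigma> * y^2))) sequentially"
  proof (rule ul_sqrt)
    fix k y assume y: "y \<in> {-\<rho>..\<rho>}"
    have "\<bar>rb k * y\<bar> < rb k" using y \<rho> r_pos[of k] by (auto simp: abs_mult)
    thus "0 \<le> (rb k / u0 k)^2 * 2 * G k (u k (rb k * y))" using G_nonneg by simp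
  qed (use \<sigma> in simp)
  moreover have "sqrt ((1/a)^2 * 2 * (\<sigma> * y^2)) = 2 * \<bar>y\<bar>" for y
  proof -
    have sa: "\<sigma> / a^2 = 2" unfolding a_sq using \<sigma> by simp
    have "(1/a)^2 * 2 * (\<sigma> * y^2) = 2 * (\<sigma> / a^2) * y^2" by (simp add: power_divide)
    also have "\<dots> = (2 * y)^2" unfolding sa by (simp add: power2_eq_square)
    finally have "sqrt ((1/a)^2 * 2 * (\<sigma> * y^2)) = sqrt ((2 * y)^2)" by (rule arg_cong)
    also have "\<dots> = \<bar>2 * y\<bar>" by (rule real_sqrt_abs)
    also have "\<dots> = 2 * \<bar>y\<bar>" by (simp add: abs_mult)
    finally show ?thesis .
  qed
  ultimately show ?thesis by simp
qed

lemma UDeriv: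
  assumes \<rho>: "0 \<le> \<rho>" "\<rho> < 1"
  shows "uniform_limit {-\<rho>..\<rho>} (\<lambda>k. deriv (\<lambda>y. u k (rb k * y) / u0 k)) (\<lambda>y. - 2 * y) sequentially"
proof -
  let ?F = "\<lambda>k y. sqrt ((rb k / u0 k)^2 * 2 * G k (u k (rb k * y)))"
  have eqf: "rb k * du k (rb k * y) / u0 k = (if y \<ge> 0 then - ?F k y else ?F k y)"
    if y: "y \<in> {-\<rho>..\<rho>}" for k y
  proof -
    have r: "rb k > 0" by (rule r_pos)
    have s: "u0 k > 0" by (rule s_pos)
    have ry: "\<bar>rb k * y\<bar> < rb k" using y \<rho> r by (auto simp: abs_mult)
    have F: "?F k y = rb k / u0 k * sqrt (2 * G k (u k (rb k * y)))"
      using r s by (simp add: real_sqrt_mult mult.assoc)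
    show ?thesis
    proof (cases "y \<ge> 0")
      case True
      hence "du k (rb k * y) = - sqrt (2 * G k (u k (rb k * y)))"
        using du_form[of "rb k * y" k] ry r by auto
      thus ?thesis using True F by simp
    next
      case False
      have "rb k * y < 0" using False r by (simp add: mult_pos_neg)
      moreover have "- rb k < rb k * y" using ry by linarith
      ultimately have "du k (rb k * y) = sqrt (2 * G k (u k (rb k * y)))"
        using du_form_neg[of k "rb k * y"] by simp
      thus ?thesis using False F by simp
    qed
  qed
  have A: "uniform_limit {0..\<rho>} (\<lambda>k y. - ?F k y) (\<lambda>y. - (2 * \<bar>y\<bar>)) sequentially"
    by (intro uniform_limit_intros uniform_limit_on_subset[OF UD2[OF \<rho>]]) auto
  have B: "uniform_limit {-\<rho>..0} ?F (\<lambda>y. 2 * \<bar>y\<bar>) sequentially"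
    by (intro uniform_limit_on_subset[OF UD2[OF \<rho>]]) auto
  have A': "uniform_limit {0..\<rho>} (\<lambda>k. deriv (\<lambda>y. u k (rb k * y) / u0 k)) (\<lambda>y. - 2 * y) sequentially"
  proof (rule iffD1[OF uniform_limit_cong' A])
    fix k y assume y: "y \<in> {0..\<rho>}"
    hence y': "y \<in> {-\<rho>..\<rho>}" "\<bar>y\<bar> < 1" using \<rho> by auto
    show "- ?F k y = deriv (\<lambda>y. u k (rb k * y) / u0 k) y"
      using deriv_phi[OF y'(2)] eqf[OF y'(1)] y by simp
  next
    fix y :: real assume "y \<in> {0..\<rho>}" thus "- (2 * \<bar>y\<bar>) = - 2 * y" by simp
  qed
  have B': "uniform_limit {-\<rho>..0} (\<lambda>k. deriv (\<lambda>y. u k (rb k * y) / u0 k)) (\<lambda>y. - 2 * y) sequentially"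
  proof (rule iffD1[OF uniform_limit_cong' B])
    fix k y assume y: "y \<in> {-\<rho>..0}"
    hence y': "y \<in> {-\<rho>..\<rho>}" "\<bar>y\<bar> < 1" using \<rho> by auto
    show "?F k y = deriv (\<lambda>y. u k (rb k * y) / u0 k) y"
    proof (cases "y = 0")
      case True
      thus ?thesis using deriv_phi[OF y'(2)] eqf[OF y'(1)] du0[of k] u_at0[of k] G_s[of k] by simp
    next
      case False
      thus ?thesis using deriv_phi[OF y'(2)] eqf[OF y'(1)] y by simp
    qed
  next
    fix y :: real assume "y \<in> {-\<rho>..0}" thus "2 * \<bar>y\<bar> = - 2 * y" by simp
  qed
  have "{-\<rho>..\<rho>} = {-\<rho>..0} \<union> {0..\<rho>}" using \<rho> by auto
  thus ?thesis using uniform_limit_on_Un[OF B' A'] by simp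
qed

lemma US:
  assumes \<rho>: "0 \<le> \<rho>" "\<rho> < 1"
  shows "uniform_limit {-\<rho>..\<rho>} (\<lambda>k y. u0 k * dQ (u k (rb k * y))) (\<lambda>y. 0) sequentially"
proof (rule uniform_limitI)
  fix \<epsilon> :: real assume \<epsilon>: "\<epsilon> > 0"
  define c where "c = (1 - \<rho>^2) / 2"
  have c: "c > 0" unfolding c_def using \<rho> by (simp add: power_less_one_iff abs_square_less_1)
  have "eventually (\<lambda>t. dist (t * dQ t) 0 < \<epsilon> * c) at_top"
    using sdQ \<epsilon> c by (intro tendstoD) auto
  then obtain M where M: "\<And>t. t \<ge> M \<Longrightarrow> \<bar>t * dQ t\<bar> < \<epsilon> * c"
    unfolding eventually_at_top_linorder dist_real_def by auto
  have "eventually (\<lambda>k. u0 k \<ge> M / c) sequentially"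
    using ev_seq[OF eventually_ge_at_top[of "M / c"]] .
  moreover have "eventually (\<lambda>k. \<forall>y\<in>{-\<rho>..\<rho>}. u k (rb k * y) \<ge> c * u0 k) sequentially"
    using phi_lb[OF \<rho>] unfolding c_def .
  ultimately show "eventually (\<lambda>k. \<forall>y\<in>{-\<rho>..\<rho>}. dist (u0 k * dQ (u k (rb k * y))) 0 < \<epsilon>) sequentially"
  proof (eventually_elim, intro ballI)
    fix k y assume Mk: "u0 k \<ge> M / c" and lb: "\<forall>y\<in>{-\<rho>..\<rho>}. u k (rb k * y) \<ge> c * u0 k"
      and y: "y \<in> {-\<rho>..\<rho>}"
    define t where "t = u k (rb k * y)"
    define s where "s = u0 k"
    have s: "s > 0" unfolding s_def by (rule s_pos)
    have ts: "t \<ge> c * s" using lb y unfolding t_def s_def by auto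
    have t0: "t > 0" using ts c s by (smt (verit) mult_pos_pos)
    have "M \<le> c * s" using Mk c unfolding s_def by (simp add: divide_le_eq mult.commute)
    hence "\<bar>t * dQ t\<bar> < \<epsilon> * c" using M ts by auto
    hence "t * \<bar>dQ t\<bar> < \<epsilon> * c" using t0 by (simp add: abs_mult)
    moreover have "c * s * \<bar>dQ t\<bar> \<le> t * \<bar>dQ t\<bar>" using ts by (intro mult_right_mono) auto
    ultimately have "c * (s * \<bar>dQ t\<bar>) < c * \<epsilon>" by (simp add: algebra_simps)
    hence "s * \<bar>dQ t\<bar> < \<epsilon>" using c by simp
    thus "dist (u0 k * dQ (u k (rb k * y))) 0 < \<epsilon>" unfolding t_def s_def using s_pos[of k]
      by (simp add: abs_mult dist_real_def)
  qed
qed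

lemma UDeriv2:
  assumes \<rho>: "0 \<le> \<rho>" "\<rho> < 1"
  shows "uniform_limit {-\<rho>..\<rho>} (\<lambda>k. deriv (deriv (\<lambda>y. u k (rb k * y) / u0 k))) (\<lambda>y. - 2) sequentially"
proof -
  have c: "(\<lambda>k. (rb k / u0 k)^2) \<longlonglongrightarrow> (1/a)^2" by (intro tendsto_intros L1)
  have "uniform_limit {-\<rho>..\<rho>} (\<lambda>k y. u0 k * dQ (u k (rb k * y)) - Q (u0 k)) (\<lambda>y. 0 - \<sigma>) sequentially"
    by (intro uniform_limit_minus US[OF \<rho>] ul_seq Qs_lim)
  from uniform_lim_mult[OF ul_seq[OF c] this bounded_const_img bounded_const_img]
  have A: "uniform_limit {-\<rho>..\<rho>} (\<lambda>k y. (rb k / u0 k)^2 * (u0 k * dQ (u k (rb k * y)) - Q (u0 k)))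
     (\<lambda>y. (1/a)^2 * (0 - \<sigma>)) sequentially" .
  have sa: "\<sigma> / a^2 = 2" unfolding a_sq using \<sigma> by simp
  have lim: "(1/a)^2 * (0 - \<sigma>) = - 2" using sa by (simp add: power_divide)
  show ?thesis
  proof (rule iffD1[OF uniform_limit_cong' A])
    fix k y assume y: "y \<in> {-\<rho>..\<rho>}"
    hence "\<bar>y\<bar> < 1" using \<rho> by auto
    have s: "u0 k > 0" by (rule s_pos)
    show "(rb k / u0 k)^2 * (u0 k * dQ (u k (rb k * y)) - Q (u0 k)) = deriv (deriv (\<lambda>y. u k (rb k * y) / u0 k)) y"
      unfolding deriv2_phi[OF \<open>\<bar>y\<bar> < 1\<close>] RR_def using s
      by (simp add: power2_eq_square field_simps)
  qed (use lim in simp)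
qed

end

lemma int_parab: "integral {0..1} (\<lambda>y::real. 1 - y^2) = 2/3"
proof -
  have "((\<lambda>y::real. 1 - y^2) has_integral ((\<lambda>y. y - y^3/3) 1 - (\<lambda>y. y - y^3/3) 0)) {0..1}"
  proof (rule fundamental_theorem_of_calculus)
    fix x :: real assume "x \<in> {0..1}"
    have "((\<lambda>y::real. y - y^3/3) has_real_derivative (1 - 3 * x^2 / 3)) (at x within {0..1})"
      by (auto intro!: derivative_eq_intros)
    thus "((\<lambda>y. y - y^3/3) has_vector_derivative (1 - x^2)) (at x within {0..1})"
      unfolding has_real_derivative_iff_has_vector_derivative by simp
  qed simp
  thus ?thesis by (simp add: integral_unique)
qed

context setting begin

lemma phi_cont: "continuous_on S (\<lambda>y. u k (rb k * y) / u0 k)"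
  by (intro continuous_intros continuous_on_compose2[OF u_cont[of UNIV k]]) (auto simp: s_pos[of k, THEN less_imp_neq, symmetric])

lemma int_stretch: "integral {0..rb k} (u k) = rb k * integral {0..1} (\<lambda>y. u k (rb k * y))"
proof -
  have r: "rb k > 0" by (rule r_pos)
  have img: "(\<lambda>x. x / rb k) ` {0..rb k} = {0..1}"
  proof
    show "(\<lambda>x. x / rb k) ` {0..rb k} \<subseteq> {0..1}" using r by auto
    show "{0..1} \<subseteq> (\<lambda>x. x / rb k) ` {0..rb k}"
    proof
      fix y :: real assume y: "y \<in> {0..1}"
      have "y = (rb k * y) / rb k" using r by simp
      moreover have "rb k * y \<in> {0..rb k}" using y r by (auto simp: mult_le_cancel_left1)
      ultimately show "y \<in> (\<lambda>x. x / rb k) ` {0..rb k}" by (rule image_eqI)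
    qed
  qed
  have "integral ((\<lambda>x. x / rb k) ` {0..rb k}) (\<lambda>x. u k (rb k * x)) = (1 / \<bar>rb k\<bar>) *\<^sub>R integral {0..rb k} (u k)"
    using r by (intro integral_stretch_real) simp
  thus ?thesis unfolding img using r by (simp add: field_simps)
qed

lemma int_lim: "(\<lambda>k. integral {0..1} (\<lambda>y. u k (rb k * y) / u0 k)) \<longlonglongrightarrow> 2/3"
proof (rule tendstoI)
  fix \<epsilon> :: real assume \<epsilon>: "\<epsilon> > 0"
  define \<rho> where "\<rho> = max 0 (1 - \<epsilon> / 4)"
  have \<rho>: "0 \<le> \<rho>" "\<rho> < 1" "\<rho> \<le> 1" "1 - \<rho> \<le> \<epsilon> / 4" using \<epsilon> unfolding \<rho>_def by (auto simp: max_def)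
  have e4: "\<epsilon> / 4 > 0" using \<epsilon> by simp
  from uniform_limitD[OF L2[OF \<rho>(1,2)] e4]
  show "eventually (\<lambda>k. dist (integral {0..1} (\<lambda>y. u k (rb k * y) / u0 k)) (2/3) < \<epsilon>) sequentially"
  proof (rule eventually_mono)
    fix k assume U: "\<forall>y\<in>{0..\<rho>}. dist (u k (rb k * y) / u0 k) (1 - y^2) < \<epsilon> / 4"
    define F where "F y = u k (rb k * y) / u0 k - (1 - y^2)" for y
    have Fc: "continuous_on S F" for S unfolding F_def by (intro continuous_intros phi_cont)
    have Fi: "F integrable_on {a..b}" for a b by (rule integrable_continuous_interval[OF Fc])
    have pi: "(\<lambda>y::real. 1 - y^2) integrable_on {0..1}" by (intro integrable_continuous_interval continuous_intros)
    have phii: "(\<lambda>y. u k (rb k * y) / u0 k) integrable_on {0..1}" by (rule integrable_continuous_interval[OF phi_cont])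
    have s: "u0 k > 0" by (rule s_pos)
    have F1: "\<bar>F y\<bar> \<le> 1" if "y \<in> {0..1}" for y
    proof -
      have "0 \<le> u k (rb k * y) / u0 k" "u k (rb k * y) / u0 k \<le> 1"
        using u_nonneg[of k "rb k * y"] u_le_all[of k "rb k * y"] s by auto
      moreover have "0 \<le> 1 - y^2" "1 - y^2 \<le> 1" using that by (auto simp: power_le_one)
      ultimately show ?thesis unfolding F_def by linarith
    qed
    have F2: "\<bar>F y\<bar> \<le> \<epsilon> / 4" if "y \<in> {0..\<rho>}" for y
    proof -
      have "dist (u k (rb k * y) / u0 k) (1 - y^2) < \<epsilon> / 4" using U that by blast
      thus ?thesis unfolding F_def dist_real_def by simp
    qed
    have I1: "\<bar>integral {0..\<rho>} F\<bar> \<le> \<epsilon> / 4"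
    proof -
      have "integral {0..\<rho>} F \<le> integral {0..\<rho>} (\<lambda>y. \<epsilon> / 4)"
      proof (rule integral_le[OF Fi])
        fix x assume "x \<in> {0..\<rho>}" thus "F x \<le> \<epsilon> / 4" using F2[of x] by linarith
      qed (intro integrable_continuous_interval continuous_intros)
      moreover have "integral {0..\<rho>} (\<lambda>y. - (\<epsilon> / 4)) \<le> integral {0..\<rho>} F"
      proof (rule integral_le[OF _ Fi])
        fix x assume "x \<in> {0..\<rho>}" thus "- (\<epsilon> / 4) \<le> F x" using F2[of x] by linarith
      qed (intro integrable_continuous_interval continuous_intros)
      moreover have "integral {0..\<rho>} (\<lambda>y. \<epsilon> / 4) = \<rho> * (\<epsilon> / 4)" using \<rho> by (simp add: content_real)
      moreover have "integral {0..\<rho>} (\<lambda>y. - (\<epsilon> / 4)) = - (\<rho> * (\<epsilon> / 4))" using \<rho> by (simp add: content_real)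
      moreover have "\<rho> * (\<epsilon> / 4) \<le> \<epsilon> / 4" using \<rho> e4 by (simp add: mult_left_le_one_le)
      ultimately show ?thesis by linarith
    qed
    have I2: "\<bar>integral {\<rho>..1} F\<bar> \<le> \<epsilon> / 4"
    proof -
      have "integral {\<rho>..1} F \<le> integral {\<rho>..1} (\<lambda>y. 1)"
      proof (rule integral_le[OF Fi])
        fix x assume "x \<in> {\<rho>..1}" thus "F x \<le> 1" using F1[of x] \<rho> by auto
      qed (intro integrable_continuous_interval continuous_intros)
      moreover have "integral {\<rho>..1} (\<lambda>y. - 1) \<le> integral {\<rho>..1} F"
      proof (rule integral_le[OF _ Fi])
        fix x assume "x \<in> {\<rho>..1}" thus "- 1 \<le> F x" using F1[of x] \<rho> by auto
      qed (intro integrable_continuous_interval continuous_intros)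
      moreover have "integral {\<rho>..1} (\<lambda>y. 1) = 1 - \<rho>" using \<rho> by (simp add: content_real)
      moreover have "integral {\<rho>..1} (\<lambda>y. - 1) = - (1 - \<rho>)" using \<rho> by (simp add: content_real)
      ultimately show ?thesis using \<rho> by linarith
    qed
    have "integral {0..1} F = integral {0..\<rho>} F + integral {\<rho>..1} F"
      using Henstock_Kurzweil_Integration.integral_combine[OF \<rho>(1) \<rho>(3) Fi] by simp
    hence "\<bar>integral {0..1} F\<bar> \<le> \<epsilon> / 2" using I1 I2 by linarith
    moreover have "integral {0..1} F = integral {0..1} (\<lambda>y. u k (rb k * y) / u0 k) - 2/3"
      unfolding F_def using integral_diff[OF phii pi] int_parab by simp
    ultimately show "dist (integral {0..1} (\<lambda>y. u k (rb k * y) / u0 k)) (2/3) < \<epsilon>"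
      using \<epsilon> by (simp add: dist_real_def)
  qed
qed

lemma mass_ratio: "(\<lambda>k. mass (u k) (rb k) / (rb k * u0 k)) \<longlonglongrightarrow> 4/3"
proof -
  have eq: "mass (u k) (rb k) / (rb k * u0 k) = 2 * integral {0..1} (\<lambda>y. u k (rb k * y) / u0 k)" for k
  proof -
    have r: "rb k > 0" by (rule r_pos)
    have s: "u0 k > 0" by (rule s_pos)
    have "integral {0..1} (\<lambda>y. u k (rb k * y) / u0 k) = integral {0..1} (\<lambda>y. u k (rb k * y)) / u0 k"
      by (rule integral_divide)
    thus ?thesis unfolding mass_def int_stretch using r s by simp
  qed
  have "(\<lambda>k. 2 * integral {0..1} (\<lambda>y. u k (rb k * y) / u0 k)) \<longlonglongrightarrow> 2 * (2/3)"
    by (intro tendsto_intros int_lim)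
  thus ?thesis unfolding eq by simp
qed

end

lemma Q_lower_bound:
  fixes Q dQ :: "real \<Rightarrow> real" and A m \<sigma> :: real
  assumes D: "\<forall>x>0. (Q has_real_derivative dQ x) (at x)"
    and A: "A > 0" and m: "1 < m"
    and asy: "Q \<sim>[at_right 0] (\<lambda>u. A * u powr (1 - m))"
    and \<sigma>: "\<sigma> > 0" and Qlim: "(Q \<longlongrightarrow> \<sigma>) at_top"
    and Qpos: "\<And>t. t > 0 \<Longrightarrow> Q t > 0"
  obtains q where "q > 0" "\<And>t. t > 0 \<Longrightarrow> q \<le> Q t"
proof -
  define f where "f u = A * u powr (1 - m)" for u :: real
  have "((\<lambda>x. if Q x = 0 \<and> f x = 0 then 1 else Q x / f x) \<longlongrightarrow> 1) (at_right 0)"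
    using asymp_equivD[OF asy] unfolding f_def .
  hence "eventually (\<lambda>x. (if Q x = 0 \<and> f x = 0 then 1 else Q x / f x) > 1/2) (at_right 0)"
    by (intro order_tendstoD) auto
  moreover have "eventually (\<lambda>x. x < (1::real)) (at_right 0)"
    unfolding eventually_at_right_field by (intro exI[of _ 1]) auto
  moreover have "eventually (\<lambda>x. x > (0::real)) (at_right 0)"
    by (simp add: eventually_at_right_less)
  ultimately have "eventually (\<lambda>x. (if Q x = 0 \<and> f x = 0 then 1 else Q x / f x) > 1/2 \<and> x < 1 \<and> x > 0) (at_right 0)"
    by (intro eventually_conj)
  then obtain e0 where e0: "e0 > 0" and e0P: "\<And>x. 0 < x \<Longrightarrow> x < e0 \<Longrightarrow>
      (if Q x = 0 \<and> f x = 0 then 1 else Q x / f x) > 1/2 \<and> x < 1 \<and> x > 0"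
    unfolding eventually_at_right_field by auto
  have near0: "Q x \<ge> A / 2" if x: "0 < x" "x < e0" for x
  proof -
    have x1: "x < 1" using e0P[OF x] by auto
    have "x powr 0 \<le> x powr (1 - m)" using x x1 m by (intro powr_mono') auto
    hence p1: "1 \<le> x powr (1 - m)" using x by simp
    hence fx: "f x \<ge> A" unfolding f_def using A by (simp add: mult_le_cancel_left1)
    hence "f x > 0" using A by simp
    hence "Q x / f x > 1/2" using e0P[OF x] by (auto split: if_splits)
    hence "Q x > f x / 2" using \<open>f x > 0\<close> by (simp add: field_simps)
    thus ?thesis using fx by simp
  qed
  have "eventually (\<lambda>t. Q t > \<sigma> / 2) at_top" using Qlim \<sigma> by (intro order_tendstoD) auto
  then obtain M where M: "\<And>t. t \<ge> M \<Longrightarrow> Q t > \<sigma> / 2" unfolding eventually_at_top_linorder by auto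
  define M' where "M' = max M e0"
  have cont: "continuous_on {e0/2..M'} Q"
    by (rule continuous_at_imp_continuous_on) (use e0 in \<open>auto intro!: DERIV_isCont[OF D[rule_format]]\<close>)
  have ne: "{e0/2..M'} \<noteq> {}" unfolding M'_def using e0 by auto
  obtain xm where xm: "xm \<in> {e0/2..M'}" "\<And>y. y \<in> {e0/2..M'} \<Longrightarrow> Q xm \<le> Q y"
    using continuous_attains_inf[OF compact_Icc ne cont] by auto
  have Qxm: "Q xm > 0" using Qpos xm e0 by auto
  define q where "q = min (A/2) (min (\<sigma>/2) (Q xm))"
  show ?thesis
  proof (rule that[of q])
    show "q > 0" unfolding q_def using A \<sigma> Qxm by auto
    fix t :: real assume t: "t > 0"
    show "q \<le> Q t"
    proof (cases "t < e0")
      case True thus ?thesis using near0[OF t True] unfolding q_def by auto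
    next
      case False
      show ?thesis
      proof (cases "t \<ge> M")
        case True thus ?thesis using M[OF True] unfolding q_def by auto
      next
        case False': False
        hence "t \<in> {e0/2..M'}" using False e0 unfolding M'_def by auto
        thus ?thesis using xm(2) unfolding q_def by fastforce
      qed
    qed
  qed
qed

theorem mainTheorem12:
  fixes Q dQ :: "real \<Rightarrow> real" and A m S :: real
    and u0 :: "nat \<Rightarrow> real" and u :: "nat \<Rightarrow> real \<Rightarrow> real" and rb :: "nat \<Rightarrow> real"
  assumes "H_EL Q dQ A m" and "H_R Q" and "e_star_infinite Q"
    and "-S \<in> {0<..}" and "(Q \<longlongrightarrow> -S) at_top"
    and "((\<lambda>s. s * dQ s) \<longlongrightarrow> 0) at_top"
    and "\<And>k. u0 k \<in> setA Q" and "filterlim u0 at_top sequentially"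
    and "\<And>k. solves_P Q dQ (u0 k) (u k) (rb k)"
  shows "filterlim (\<lambda>k. mass (u k) (rb k)) at_top sequentially \<and>
    (\<lambda>k. u0 k ^ 4) \<sim>[sequentially] (\<lambda>k. 9 * \<bar>S\<bar> / 32 * mass (u k) (rb k) ^ 2) \<and>
    (\<lambda>k. rb k ^ 4) \<sim>[sequentially] (\<lambda>k. 9 / (8 * \<bar>S\<bar>) * mass (u k) (rb k) ^ 2) \<and>
    (\<forall>K. compact K \<and> K \<subseteq> {-1<..<1} \<longrightarrow>
           uniform_limit K (\<lambda>k y. u k (rb k * y) / u0 k) (\<lambda>y. 1 - y\<^sup>2) sequentially \<and>
           uniform_limit K (\<lambda>k. deriv (\<lambda>y. u k (rb k * y) / u0 k)) (\<lambda>y. - 2 * y) sequentially \<and>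
           uniform_limit K (\<lambda>k. deriv (deriv (\<lambda>y. u k (rb k * y) / u0 k))) (\<lambda>y. - 2) sequentially)"
proof -
  define \<sigma> where "\<sigma> = - S"
  have \<sigma>: "\<sigma> > 0" using assms(4) unfolding \<sigma>_def by simp
  have absS: "\<bar>S\<bar> = \<sigma>" using \<sigma> unfolding \<sigma>_def by simp
  have Qlim: "(Q \<longlongrightarrow> \<sigma>) at_top" using assms(5) unfolding \<sigma>_def .
  have D: "\<forall>x>0. (Q has_real_derivative dQ x) (at x)" and A: "A > 0" and m: "1 < m"
    and asy: "Q \<sim>[at_right 0] (\<lambda>u. A * u powr (1 - m))"
    using assms(1) unfolding H_EL_def by auto
  have Qs: "(\<lambda>k. Q (u0 k)) \<longlonglongrightarrow> \<sigma>" using filterlim_compose[OF Qlim assms(8)] .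
  have Qpos: "Q t > 0" if t: "t > 0" for t
  proof -
    have "eventually (\<lambda>k. Q (u0 k) > 0) sequentially" using Qs \<sigma> by (intro order_tendstoD) auto
    moreover have "eventually (\<lambda>k. u0 k > t) sequentially"
      using assms(8) unfolding filterlim_at_top_dense by auto
    ultimately have "eventually (\<lambda>k. Q (u0 k) > 0 \<and> u0 k > t) sequentially" by (rule eventually_conj)
    then obtain k where k: "Q (u0 k) > 0" "u0 k > t" unfolding eventually_sequentially by auto
    have "RR Q t > RR Q (u0 k)" using assms(7)[of k] k t unfolding setA_def by auto
    moreover have "RR Q (u0 k) > 0" using k t unfolding RR_def by simp
    ultimately have "Q t / t > 0" unfolding RR_def by simp
    thus ?thesis using t by (simp add: zero_less_divide_iff)
  qed
  obtain q where q: "q > 0" "\<And>t. t > 0 \<Longrightarrow> q \<le> Q t"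
    using Q_lower_bound[OF D A m asy \<sigma> Qlim Qpos] by blast
  interpret S: setting Q dQ \<sigma> q u0 u rb
    by unfold_locales (use D \<sigma> Qlim assms(6) q assms(7,8,9) in auto)
  define Mk where "Mk k = mass (u k) (rb k)" for k
  have L1: "(\<lambda>k. rb k / u0 k) \<longlonglongrightarrow> 1 / S.a" by (rule S.L1)
  have MR: "(\<lambda>k. Mk k / (rb k * u0 k)) \<longlonglongrightarrow> 4/3" unfolding Mk_def by (rule S.mass_ratio)
  have "(\<lambda>k. Mk k / (rb k * u0 k) * (rb k / u0 k)) \<longlonglongrightarrow> 4/3 * (1 / S.a)"
    by (intro tendsto_intros MR L1)
  moreover have "Mk k / (rb k * u0 k) * (rb k / u0 k) = Mk k / u0 k ^ 2" for k
    using S.r_pos[of k] S.s_pos[of k] by (simp add: power2_eq_square field_simps)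
  ultimately have M2: "(\<lambda>k. Mk k / u0 k ^ 2) \<longlonglongrightarrow> 4 / (3 * S.a)" by simp
  have apos: "S.a > 0" by (rule S.a_pos)
  have asq: "S.a ^ 2 = \<sigma> / 2" by (rule S.a_sq)
  have u02: "filterlim (\<lambda>k. u0 k ^ 2) at_top sequentially"
    by (rule filterlim_pow_at_top[OF _ assms(8)]) simp
  have "filterlim (\<lambda>k. Mk k / u0 k ^ 2 * u0 k ^ 2) at_top sequentially"
    by (rule filterlim_tendsto_pos_mult_at_top[OF M2 _ u02]) (use apos in simp)
  moreover have "Mk k / u0 k ^ 2 * u0 k ^ 2 = Mk k" for k using S.s_pos[of k] by simp
  ultimately have P1: "filterlim Mk at_top sequentially" by simp
  have lim2: "(\<lambda>k. 1 / (9 * \<sigma> / 32 * (Mk k / u0 k ^ 2) ^ 2)) \<longlonglongrightarrow> 1 / (9 * \<sigma> / 32 * (4 / (3 * S.a)) ^ 2)"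
    using apos \<sigma> by (intro tendsto_intros M2) auto
  have c2: "1 / (9 * \<sigma> / 32 * (4 / (3 * S.a)) ^ 2) = 1"
    using apos \<sigma> asq by (simp add: power_divide power_mult_distrib field_simps)
  have e2: "1 / (9 * \<sigma> / 32 * (Mk k / u0 k ^ 2) ^ 2) = u0 k ^ 4 / (9 * \<sigma> / 32 * Mk k ^ 2)" for k
    using S.s_pos[of k] by (cases "Mk k = 0") (simp_all add: power_divide field_simps)
  have "(\<lambda>k. u0 k ^ 4 / (9 * \<sigma> / 32 * Mk k ^ 2)) \<longlonglongrightarrow> 1" using lim2 unfolding e2 c2 .
  hence P2: "(\<lambda>k. u0 k ^ 4) \<sim>[sequentially] (\<lambda>k. 9 * \<bar>S\<bar> / 32 * Mk k ^ 2)"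
    unfolding absS by (rule asymp_equivI')
  have lim3: "(\<lambda>k. (rb k / u0 k) ^ 4 / (9 / (8 * \<sigma>) * (Mk k / u0 k ^ 2) ^ 2)) \<longlonglongrightarrow>
      (1 / S.a) ^ 4 / (9 / (8 * \<sigma>) * (4 / (3 * S.a)) ^ 2)"
    using apos \<sigma> by (intro tendsto_intros M2 L1) auto
  have c3: "(1 / S.a) ^ 4 / (9 / (8 * \<sigma>) * (4 / (3 * S.a)) ^ 2) = 1"
  proof -
    have a4: "S.a ^ 4 = S.a^2 * S.a^2" by (simp add: power2_eq_square power4_eq_xxxx)
    have key: "2 * S.a ^ 4 = \<sigma> * S.a\<^sup>2" unfolding a4 asq by simp
    have "4 * S.a ^ 4 = \<sigma>\<^sup>2" unfolding a4 asq by (simp add: power2_eq_square)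
    thus ?thesis using apos \<sigma> asq key by (simp add: power_divide power_mult_distrib field_simps)
  qed
  have e3: "(rb k / u0 k) ^ 4 / (9 / (8 * \<sigma>) * (Mk k / u0 k ^ 2) ^ 2) = rb k ^ 4 / (9 / (8 * \<sigma>) * Mk k ^ 2)" for k
    using S.s_pos[of k] \<sigma> by (cases "Mk k = 0") (simp_all add: power_divide field_simps)
  have "(\<lambda>k. rb k ^ 4 / (9 / (8 * \<sigma>) * Mk k ^ 2)) \<longlonglongrightarrow> 1" using lim3 unfolding e3 c3 .
  hence P3: "(\<lambda>k. rb k ^ 4) \<sim>[sequentially] (\<lambda>k. 9 / (8 * \<bar>S\<bar>) * Mk k ^ 2)"
    unfolding absS by (rule asymp_equivI')
  have P4: "uniform_limit K (\<lambda>k y. u k (rb k * y) / u0 k) (\<lambda>y. 1 - y\<^sup>2) sequentially \<and>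
           uniform_limit K (\<lambda>k. deriv (\<lambda>y. u k (rb k * y) / u0 k)) (\<lambda>y. - 2 * y) sequentially \<and>
           uniform_limit K (\<lambda>k. deriv (deriv (\<lambda>y. u k (rb k * y) / u0 k))) (\<lambda>y. - 2) sequentially"
    if K: "compact K" "K \<subseteq> {-1<..<1}" for K
  proof (cases "K = {}")
    case True thus ?thesis by simp
  next
    case False
    have "compact (abs ` K)" using K by (intro compact_continuous_image continuous_intros)
    moreover have "abs ` K \<noteq> {}" using False by simp
    ultimately obtain \<rho> where \<rho>: "\<rho> \<in> abs ` K" "\<And>z. z \<in> abs ` K \<Longrightarrow> z \<le> \<rho>"
      using compact_attains_sup by metis
    obtain x0 where x0: "x0 \<in> K" "\<rho> = \<bar>x0\<bar>" using \<rho>(1) by auto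
    have "x0 \<in> {-1<..<1}" using x0 K(2) by blast
    hence \<rho>01: "0 \<le> \<rho>" "\<rho> < 1" using x0 by auto
    have sub: "K \<subseteq> {-\<rho>..\<rho>}"
    proof
      fix y assume "y \<in> K"
      hence "\<bar>y\<bar> \<le> \<rho>" using \<rho>(2) by auto
      thus "y \<in> {-\<rho>..\<rho>}" by auto
    qed
    show ?thesis
      using uniform_limit_on_subset[OF S.U1[OF \<rho>01] sub]
        uniform_limit_on_subset[OF S.UDeriv[OF \<rho>01] sub]
        uniform_limit_on_subset[OF S.UDeriv2[OF \<rho>01] sub] by simp
  qed
  show ?thesis using P1 P2 P3 P4 unfolding Mk_def by blast
qed

end
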